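(* Let $m\ge1$ and $n\ge0$. Then $$\sum_{w\in W_0}w\left(\frac{\prod_{i=1}^m\prod_{j=1}^n(1-x_i^{-1}y_j^{-1})\;x_1^{m-1}x_2^{m-2}\cdots x_m^{0}\;y_1^{n}y_2^{n-1}\cdots y_n^{1}}{\Delta(u)\Delta(v)\prod_{j=1}^n(y_j-y_j^{-1})}\right)=2^{\min(m-1,n)}.$$
   Context: Set $u_i=x_i+x_i^{-1}$ and $v_j=y_j+y_j^{-1}$, with $\Delta(u)=\prod_{i<j}(u_i-u_j)$ and $\Delta(v)=\prod_{i<j}(v_i-v_j)$. $W_0=(S_m\ltimes\mathbb Z_2^{m-1})\times(S_n\ltimes\mathbb Z_2^n)$ is the Weyl group of type $D_m\times C_n$. It acts by permuting $x_1,\dots,x_m$ and permuting $y_1,\dots,y_n$. It also inverts any even number of the $x_i$ (i.e. $x_i\mapsto x_i^{-1}$) and any subset of the $y_j$. The left-hand side is the Euler supercharacter of the trivial representation of the parabolic subalgebra of $\mathfrak{osp}(2m,2n)$ with Levi part $\mathfrak{gl}(m,n)$. *)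

theory Defs
  imports Complex_Main "HOL-Combinatorics.Permutations"
begin

text \<open>Variables x_1..x_m and y_1..y_n are functions nat => complex, indices 1..m, 1..n.\<close>

definition uvar :: "complex \<Rightarrow> complex" where
  "uvar z = z + inverse z"

definition vandermonde :: "nat \<Rightarrow> (nat \<Rightarrow> complex) \<Rightarrow> complex" where
  "vandermonde k u = (\<Prod>i\<in>{1..k}. \<Prod>j\<in>{i<..k}. (u i - u j))"

definition summand :: "nat \<Rightarrow> nat \<Rightarrow> (nat \<Rightarrow> complex) \<Rightarrow> (nat \<Rightarrow> complex) \<Rightarrow> complex" where
  "summand m n x y =
     ((\<Prod>i\<in>{1..m}. \<Prod>j\<in>{1..n}. (1 - inverse (x i) * inverse (y j)))
      * (\<Prod>i\<in>{1..m}. x i ^ (m - i)) * (\<Prod>j\<in>{1..n}. y j ^ (n + 1 - j)))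
     / (vandermonde m (\<lambda>i. uvar (x i)) * vandermonde n (\<lambda>j. uvar (y j))
        * (\<Prod>j\<in>{1..n}. (y j - inverse (y j))))"

text \<open>Action of the Weyl group element (sigma, S, tau, T) of type D_m x C_n on the variables:
  x_i |-> x_(sigma i) or its inverse (if i in S, |S| even), similarly for y (T arbitrary).\<close>
definition weyl_act :: "(nat \<Rightarrow> nat) \<Rightarrow> nat set \<Rightarrow> (nat \<Rightarrow> complex) \<Rightarrow> nat \<Rightarrow> complex" where
  "weyl_act \<sigma> S x = (\<lambda>i. if i \<in> S then inverse (x (\<sigma> i)) else x (\<sigma> i))"

end

theory Submission
  imports Defs "HOL-Computational_Algebra.Polynomial"
begin

definition pprod :: "(nat \<Rightarrow> nat \<Rightarrow> complex) \<Rightarrow> nat set \<Rightarrow> complex" where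
  "pprod g A = (\<Prod>i\<in>A. \<Prod>j\<in>{j\<in>A. i<j}. g i j)"

lemma pprod_remove:
  assumes fin: "finite A" and k: "k \<in> A" and sym: "\<And>i j. g i j = g j i"
  shows "pprod g A = pprod g (A - {k}) * (\<Prod>j\<in>A-{k}. g k j)"
proof -
  have s1: "{j\<in>A. i<j} = {j\<in>A-{k}. i<j} \<union> (if i < k then {k} else {})" if "i \<noteq> k" for i
    using that k by auto
  have "pprod g A = (\<Prod>j\<in>{j\<in>A. k<j}. g k j) * (\<Prod>i\<in>A-{k}. \<Prod>j\<in>{j\<in>A. i<j}. g i j)"
    unfolding pprod_def using prod.remove[OF fin k] by simp
  also have "(\<Prod>i\<in>A-{k}. \<Prod>j\<in>{j\<in>A. i<j}. g i j) =
      (\<Prod>i\<in>A-{k}. (\<Prod>j\<in>{j\<in>A-{k}. i<j}. g i j) * (if i < k then g i k else 1))"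
  proof (rule prod.cong[OF refl])
    fix i assume i: "i \<in> A - {k}"
    show "(\<Prod>j\<in>{j\<in>A. i<j}. g i j) = (\<Prod>j\<in>{j\<in>A-{k}. i<j}. g i j) * (if i < k then g i k else 1)"
      using i fin by (subst s1) (auto simp: prod.union_disjoint)
  qed
  also have "\<dots> = pprod g (A - {k}) * (\<Prod>i\<in>A-{k}. if i < k then g k i else 1)"
  proof -
    have "(\<Prod>i\<in>A-{k}. if i < k then g i k else 1) = (\<Prod>i\<in>A-{k}. if i < k then g k i else 1)"
      by (rule prod.cong) (auto simp: sym[of _ k])
    thus ?thesis unfolding pprod_def by (simp add: prod.distrib)
  qed
  also have "(\<Prod>i\<in>A-{k}. if i < k then g k i else 1) = (\<Prod>i\<in>{i\<in>A-{k}. i<k}. g k i)"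
    using fin by (intro prod.inter_filter[symmetric]) simp
  finally have "pprod g A = pprod g (A - {k}) * ((\<Prod>j\<in>{j\<in>A. k<j}. g k j) * (\<Prod>i\<in>{i\<in>A-{k}. i<k}. g k i))"
    by (simp add: algebra_simps)
  also have "(\<Prod>j\<in>{j\<in>A. k<j}. g k j) * (\<Prod>i\<in>{i\<in>A-{k}. i<k}. g k i) = (\<Prod>j\<in>A-{k}. g k j)"
  proof -
    have "A - {k} = {j\<in>A. k<j} \<union> {i\<in>A-{k}. i<k}" by auto
    hence "(\<Prod>j\<in>A-{k}. g k j) = (\<Prod>j\<in>{j\<in>A. k<j}. g k j) * (\<Prod>i\<in>{i\<in>A-{k}. i<k}. g k i)"
      using fin by (metis (no_types, lifting) prod.union_disjoint finite_Diff finite_subset mem_Collect_eq disjoint_iff less_asym subsetI Diff_subset)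
    thus ?thesis by simp
  qed
  finally show ?thesis .
qed

lemma pprod_bij:
  assumes "finite A" "bij_betw \<sigma> A A'" "\<And>i j. g i j = g j i"
  shows "pprod (\<lambda>i j. g (\<sigma> i) (\<sigma> j)) A = pprod g A'"
  using assms(1,2)
proof (induction A arbitrary: A' rule: finite_induct)
  case empty
  then show ?case by (simp add: pprod_def bij_betw_def)
next
  case (insert k F)
  have A': "A' = insert (\<sigma> k) (\<sigma> ` F)" "\<sigma> k \<notin> \<sigma> ` F"
    using insert.prems insert.hyps by (auto simp: bij_betw_def)
  have bF: "bij_betw \<sigma> F (A' - {\<sigma> k})"
    using insert.prems insert.hyps A' by (auto simp: bij_betw_def inj_on_def)
  have finA': "finite A'" using A' insert.hyps by auto
  have "pprod (\<lambda>i j. g (\<sigma> i) (\<sigma> j)) (insert k F)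
      = pprod (\<lambda>i j. g (\<sigma> i) (\<sigma> j)) F * (\<Prod>j\<in>F. g (\<sigma> k) (\<sigma> j))"
    using pprod_remove[of "insert k F" k "\<lambda>i j. g (\<sigma> i) (\<sigma> j)"] insert.hyps assms(3) by auto
  also have "\<dots> = pprod g (A' - {\<sigma> k}) * (\<Prod>j\<in>A' - {\<sigma> k}. g (\<sigma> k) j)"
    using insert.IH[OF bF] prod.reindex_bij_betw[OF bF, of "g (\<sigma> k)"] by simp
  also have "\<dots> = pprod g A'"
    using pprod_remove[of A' "\<sigma> k" g] finA' A' assms(3) by simp
  finally show ?case .
qed

lemma pprod_ext_one:
  assumes "finite A" "finite F" "A \<inter> F = {}" "\<And>i j. g i j = g j i"
    "\<And>i j. i \<in> F \<Longrightarrow> g i j = 1"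
  shows "pprod g (A \<union> F) = pprod g A"
  using assms(2,3,5)
proof (induction F rule: finite_induct)
  case empty then show ?case by simp
next
  case (insert f F)
  have "pprod g (A \<union> insert f F) = pprod g (A \<union> F) * (\<Prod>j\<in>(A \<union> insert f F) - {f}. g f j)"
    using pprod_remove[of "A \<union> insert f F" f g] assms insert.hyps insert.prems
    by (simp add: insert_Diff_if Un_Diff)
  also have "(\<Prod>j\<in>(A \<union> insert f F) - {f}. g f j) = 1" using insert.prems(2) by simp
  finally show ?case using insert by auto
qed

definition inv_on :: "nat set \<Rightarrow> (nat \<Rightarrow> complex) \<Rightarrow> nat \<Rightarrow> complex" where
  "inv_on R z = (\<lambda>k. if k \<in> R then inverse (z k) else z k)"

definition Cf :: "nat set \<Rightarrow> nat set \<Rightarrow> (nat \<Rightarrow> complex) \<Rightarrow> (nat \<Rightarrow> complex) \<Rightarrow> complex" where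
  "Cf A B a b = (\<Prod>i\<in>A. \<Prod>j\<in>B. 1 - a i * b j)"
definition Da :: "nat set \<Rightarrow> (nat \<Rightarrow> complex) \<Rightarrow> complex" where
  "Da A a = pprod (\<lambda>i j. 1 - a i * a j) A"
definition Db :: "nat set \<Rightarrow> (nat \<Rightarrow> complex) \<Rightarrow> complex" where
  "Db B b = pprod (\<lambda>i j. 1 - b i * b j) B * (\<Prod>j\<in>B. 1 - b j * b j)"
definition Kf :: "nat set \<Rightarrow> nat set \<Rightarrow> (nat \<Rightarrow> complex) \<Rightarrow> (nat \<Rightarrow> complex) \<Rightarrow> complex" where
  "Kf A B a b = Cf A B a b / (Da A a * Db B b)"

lemma Da_remove: "finite A \<Longrightarrow> k \<in> A \<Longrightarrow> Da A a = Da (A - {k}) a * (\<Prod>j\<in>A-{k}. 1 - a k * a j)"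
  unfolding Da_def by (rule pprod_remove) (auto simp: mult.commute)

lemma Db_remove: "finite B \<Longrightarrow> k \<in> B \<Longrightarrow> Db B b = Db (B - {k}) b * (\<Prod>j\<in>B-{k}. 1 - b k * b j) * (1 - b k * b k)"
  unfolding Db_def
  by (subst pprod_remove[of B k]) (auto simp: mult.commute prod.remove mult_ac)

lemma Cf_removeA: "finite A \<Longrightarrow> k \<in> A \<Longrightarrow> Cf A B a b = Cf (A - {k}) B a b * (\<Prod>j\<in>B. 1 - a k * b j)"
  unfolding Cf_def by (subst prod.remove) (auto simp: mult.commute)

lemma Cf_removeB: "finite B \<Longrightarrow> k \<in> B \<Longrightarrow> Cf A B a b = Cf A (B - {k}) a b * (\<Prod>i\<in>A. 1 - a i * b k)"
  unfolding Cf_def by (subst prod.remove) (auto simp: mult.commute prod.distrib)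

lemma Da_nz: "finite A \<Longrightarrow> (\<And>i j. i \<in> A \<Longrightarrow> j \<in> A \<Longrightarrow> i \<noteq> j \<Longrightarrow> a i * a j \<noteq> 1) \<Longrightarrow> Da A a \<noteq> 0"
  unfolding Da_def pprod_def by (auto simp: prod_zero_iff)

lemma Db_nz: "finite B \<Longrightarrow> (\<And>i j. i \<in> B \<Longrightarrow> j \<in> B \<Longrightarrow> b i * b j \<noteq> 1) \<Longrightarrow> Db B b \<noteq> 0"
  unfolding Db_def pprod_def by (auto simp: prod_zero_iff)

lemma Kf_cong: "(\<And>i. i \<in> A \<Longrightarrow> a i = a' i) \<Longrightarrow> (\<And>j. j \<in> B \<Longrightarrow> b j = b' j) \<Longrightarrow> Kf A B a b = Kf A B a' b'"
  unfolding Kf_def Cf_def Da_def Db_def pprod_def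
  by (intro arg_cong2[where f="(/)"] arg_cong2[where f="(*)"] prod.cong refl) auto

lemma frac_aux: "(P::complex) \<noteq> 0 \<Longrightarrow> q \<noteq> 0 \<Longrightarrow> (x*y)/(d*(e*P*q)) * (q*P) = x/(d*e)*y"
  by (cases "d=0"; cases "e=0") (simp_all add: field_simps)

lemma EVb:
  assumes "finite A" "finite B" "k \<in> B" "c k = w" "Da A a \<noteq> 0" "Db (B - {k}) c \<noteq> 0"
    "(\<Prod>j\<in>B-{k}. 1 - w * c j) \<noteq> 0" "1 - w * w \<noteq> 0"
  shows "Kf A B a c * (\<Prod>j\<in>B. 1 - c j * w) = Kf A (B - {k}) a c * (\<Prod>i\<in>A. 1 - a i * w)"
proof -
  have p1: "(\<Prod>j\<in>B. 1 - c j * w) = (1 - w * w) * (\<Prod>j\<in>B-{k}. 1 - w * c j)"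
    using assms by (subst prod.remove[of B k]) (auto simp: mult.commute)
  have e1: "Db B c = Db (B - {k}) c * (\<Prod>j\<in>B-{k}. 1 - w * c j) * (1 - w * w)"
    using Db_remove[of B k c] assms by simp
  have e2: "Cf A B a c = Cf A (B - {k}) a c * (\<Prod>i\<in>A. 1 - a i * w)"
    using Cf_removeB[of B k A a c] assms by simp
  have "Kf A B a c * (\<Prod>j\<in>B. 1 - c j * w) = (Cf A (B - {k}) a c * (\<Prod>i\<in>A. 1 - a i * w)) /
     (Da A a * (Db (B - {k}) c * (\<Prod>j\<in>B-{k}. 1 - w * c j) * (1 - w * w))) * ((1 - w * w) * (\<Prod>j\<in>B-{k}. 1 - w * c j))"
    unfolding Kf_def p1 e1 e2 by simp
  also have "\<dots> = Cf A (B - {k}) a c / (Da A a * Db (B - {k}) c) * (\<Prod>i\<in>A. 1 - a i * w)"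
    by (rule frac_aux) (use assms(7,8) in auto)
  finally show ?thesis unfolding Kf_def .
qed

lemma EVa:
  assumes "finite A" "finite B" "k \<in> A" "c k = w" "Da (A - {k}) c \<noteq> 0" "Db B b \<noteq> 0"
    "(\<Prod>i\<in>A-{k}. 1 - w * c i) \<noteq> 0"
  shows "Kf A B c b * (\<Prod>i\<in>A. 1 - c i * w) = Kf (A - {k}) B c b * ((1 - w * w) * (\<Prod>j\<in>B. 1 - w * b j))"
proof -
  have p1: "(\<Prod>i\<in>A. 1 - c i * w) = (1 - w * w) * (\<Prod>i\<in>A-{k}. 1 - w * c i)"
    using assms by (subst prod.remove[of A k]) (auto simp: mult.commute)
  have e1: "Da A c = Da (A - {k}) c * (\<Prod>i\<in>A-{k}. 1 - w * c i)"
    using Da_remove[of A k c] assms by simp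
  have e2: "Cf A B c b = Cf (A - {k}) B c b * (\<Prod>j\<in>B. 1 - w * b j)"
    using Cf_removeA[of A k B c b] assms by simp
  have g: "\<And>(x::complex) y d e P q. P \<noteq> 0 \<Longrightarrow> (x*y)/((d*P)*e) * (q*P) = x/(d*e)*(q*y)"
    by (simp add: field_simps)
  show ?thesis
    unfolding Kf_def p1 e1 e2 by (rule g) (use assms(7) in auto)
qed

lemma sum_Pow_insert:
  assumes "finite B" "k \<notin> B"
  shows "(\<Sum>T\<in>Pow (insert k B). f T) = (\<Sum>T\<in>Pow B. f T) + (\<Sum>T\<in>Pow B. f (insert k T))"
proof -
  have "(\<Sum>T\<in>Pow (insert k B). f T) = (\<Sum>T\<in>Pow B. f T) + (\<Sum>T\<in>insert k ` Pow B. f T)"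
    unfolding Pow_insert using assms by (intro sum.union_disjoint) auto
  also have "(\<Sum>T\<in>insert k ` Pow B. f T) = (\<Sum>T\<in>Pow B. f (insert k T))"
    using assms by (subst sum.reindex) (auto simp: inj_on_def)
  finally show ?thesis .
qed

lemma poly_lin_prod: "poly (\<Prod>j\<in>B. [:1, - ((c::nat\<Rightarrow>complex) j):]) w = (\<Prod>j\<in>B. 1 - c j * w)"
  unfolding poly_prod by (intro prod.cong) (simp_all add: algebra_simps)

lemma degree_lin_prod: "finite B \<Longrightarrow> degree (\<Prod>j\<in>B. [:1, - ((c::nat\<Rightarrow>complex) j):]) \<le> card B"
proof -
  assume fB: "finite B"
  have "degree (\<Prod>j\<in>B. [:1, - (c j):]) \<le> (\<Sum>j\<in>B. degree [:1, - (c j):])"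
    using degree_prod_sum_le[OF fB, of "\<lambda>j. [:1, - (c j):]"] by (simp add: o_def)
  also have "\<dots> \<le> (\<Sum>j\<in>B. 1)" by (intro sum_mono) simp
  finally show ?thesis by simp
qed

lemma degree_sum_smult_le: "finite X \<Longrightarrow> (\<And>T. T \<in> X \<Longrightarrow> degree (p T) \<le> d) \<Longrightarrow> degree (\<Sum>T\<in>X. smult (k T) (p T)) \<le> d"
  by (rule degree_sum_le) (auto intro: order_trans[OF degree_smult_le])

definition HB :: "nat set \<Rightarrow> (nat \<Rightarrow> complex) \<Rightarrow> bool" where
  "HB B b \<longleftrightarrow> (\<forall>j\<in>B. b j \<noteq> 0 \<and> b j * b j \<noteq> 1) \<and> (\<forall>i\<in>B. \<forall>j\<in>B. i \<noteq> j \<longrightarrow> b i \<noteq> b j \<and> b i * b j \<noteq> 1)"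

lemma HB_inv:
  assumes "HB B b" "i \<in> B" "j \<in> B"
  shows "inv_on T b i * inv_on T b j \<noteq> 1"
proof (cases "i = j")
  case True
  then show ?thesis using assms unfolding HB_def inv_on_def
    by (auto simp: field_simps)
next
  case False
  have h: "b i \<noteq> 0" "b j \<noteq> 0" "b i \<noteq> b j" "b i * b j \<noteq> 1" using assms False unfolding HB_def by auto
  show ?thesis unfolding inv_on_def using h
    by (auto simp: field_simps)
qed

lemma HB_inv_nz: "HB B b \<Longrightarrow> i \<in> B \<Longrightarrow> inv_on T b i \<noteq> 0"
  unfolding HB_def inv_on_def by auto

lemma HB_sub: "HB B b \<Longrightarrow> B' \<subseteq> B \<Longrightarrow> HB B' b"
  unfolding HB_def by blast

lemma HB_Db: "finite B \<Longrightarrow> HB B b \<Longrightarrow> Db B (inv_on T b) \<noteq> 0"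
  by (rule Db_nz) (auto dest: HB_inv)

lemma Da_le1: "card A \<le> 1 \<Longrightarrow> finite A \<Longrightarrow> Da A a = 1"
proof -
  assume "card A \<le> 1" "finite A"
  then have "A = {} \<or> (\<exists>p. A = {p})" by (metis card_0_eq card_1_singletonE le_Suc_eq One_nat_def le_zero_eq)
  moreover have "{j\<in>{p}. p < j} = {}" for p :: nat by auto
  ultimately show ?thesis unfolding Da_def pprod_def by (elim disjE exE) (simp_all only: prod.empty prod.insert_remove finite.emptyI, simp)
qed

lemma inv_on_insert: "j \<noteq> k \<Longrightarrow> inv_on (insert k T) b j = inv_on T b j"
  unfolding inv_on_def by auto

lemma Y_main:
  "\<forall>A B a b. card B = n \<longrightarrow> finite A \<longrightarrow> finite B \<longrightarrow> card A \<le> card B + 1 \<longrightarrow>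
     (\<forall>i\<in>A. \<forall>j\<in>A. i \<noteq> j \<longrightarrow> a i * a j \<noteq> 1) \<longrightarrow> HB B b \<longrightarrow>
     (\<Sum>T\<in>Pow B. Kf A B a (inv_on T b)) = 1"
proof (induction n)
  case 0
  show ?case
  proof (intro allI impI)
    fix A B :: "nat set" and a b :: "nat \<Rightarrow> complex"
    assume h: "card B = 0" "finite A" "finite B" "card A \<le> card B + 1"
    then have B: "B = {}" by simp
    have "Da A a = 1" using h by (intro Da_le1) auto
    then show "(\<Sum>T\<in>Pow B. Kf A B a (inv_on T b)) = 1"
      using B by (simp add: Kf_def Cf_def Db_def pprod_def)
  qed
next
  case (Suc n)
  show ?case
  proof (intro allI impI)
    fix A B :: "nat set" and a b :: "nat \<Rightarrow> complex"
    assume cB: "card B = Suc n" and fA: "finite A" and fB: "finite B" and cA: "card A \<le> card B + 1"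
      and ha: "\<forall>i\<in>A. \<forall>j\<in>A. i \<noteq> j \<longrightarrow> a i * a j \<noteq> 1" and hb: "HB B b"
    define c where "c T = inv_on T b" for T
    have main: "(\<Sum>T\<in>Pow B. Kf A B a (c T)) = 1"
      if A0: "A \<noteq> {}" and fA: "finite A" and cA: "card A \<le> card B + 1"
        and ha: "\<forall>i\<in>A. \<forall>j\<in>A. i \<noteq> j \<longrightarrow> a i * a j \<noteq> 1" for A :: "nat set" and a :: "nat \<Rightarrow> complex"
    proof -
      obtain m where m: "m \<in> A" using A0 by blast
      define A' where "A' = A - {m}"
      have fA': "finite A'" using fA by (simp add: A'_def)
      have cA': "card A' \<le> card B" using cA m fA by (simp add: A'_def)
      have haA': "\<forall>i\<in>A'. \<forall>j\<in>A'. i \<noteq> j \<longrightarrow> a i * a j \<noteq> 1" using ha by (auto simp: A'_def)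
      have DaA': "Da A' a \<noteq> 0" using haA' fA' by (intro Da_nz) auto
      have pm: "(\<Prod>i\<in>A'. 1 - a m * a i) \<noteq> 0" using ha m fA' by (auto simp: A'_def)
      have DbB: "Db B (c T) \<noteq> 0" for T unfolding c_def using HB_Db[OF fB hb] .
      have ev: "Kf A' B a (c T) * (\<Prod>j\<in>B. 1 - c T j * c T k) = Kf A' (B - {k}) a (c T) * (\<Prod>i\<in>A'. 1 - a i * c T k)"
        if k: "k \<in> B" for T k
      proof (rule EVb[OF fA' fB k refl DaA'])
        show "Db (B - {k}) (c T) \<noteq> 0" unfolding c_def using HB_Db[OF _ HB_sub[OF hb]] fB by auto
        show "(\<Prod>j\<in>B - {k}. 1 - c T k * c T j) \<noteq> 0" unfolding c_def using HB_inv[OF hb k] fB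
          by (auto simp: prod_zero_iff)
        show "1 - c T k * c T k \<noteq> 0" unfolding c_def using HB_inv[OF hb k k] by auto
      qed
      have IH: "(\<Sum>T\<in>Pow (B - {k}). Kf A' (B - {k}) a (c T)) = 1" if k: "k \<in> B" for k
        using Suc.IH[rule_format, of "B - {k}" A' a b] k cB fA' fB cA' haA' HB_sub[OF hb, of "B - {k}"]
        by (auto simp: c_def)
      define Q where "Q = (\<Sum>T\<in>Pow B. smult (Kf A' B a (c T)) (\<Prod>j\<in>B. [:1, - (c T j):]))"
      define R where "R = (\<Prod>i\<in>A'. [:1, - (a i):])"
      have polyQ: "poly Q x = (\<Sum>T\<in>Pow B. Kf A' B a (c T) * (\<Prod>j\<in>B. 1 - c T j * x))" for x
        unfolding Q_def by (simp add: poly_sum poly_lin_prod)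
      have polyR: "poly R x = (\<Prod>i\<in>A'. 1 - a i * x)" for x
        unfolding R_def by (rule poly_lin_prod)
      have splitB: "(\<Sum>T\<in>Pow B. f T) = (\<Sum>T\<in>Pow (B - {k}). f T) + (\<Sum>T\<in>Pow (B - {k}). f (insert k T))"
        if k: "k \<in> B" for k and f :: "nat set \<Rightarrow> complex"
        using sum_Pow_insert[of "B - {k}" k f] fB k by (simp add: insert_absorb)
      have cins: "c (insert k T) j = c T j" if "j \<noteq> k" for k T j
        unfolding c_def using that by (rule inv_on_insert)
      have val: "poly Q x = poly R x" if x: "x \<in> b ` B \<union> (\<lambda>j. inverse (b j)) ` B" for x
      proof -
        obtain k where k: "k \<in> B" and xk: "x = b k \<or> x = inverse (b k)" using x by auto
        have bk0: "b k \<noteq> 0" using hb k by (auto simp: HB_def)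
        have T1: "T \<subseteq> B - {k} \<Longrightarrow> c T k = b k" for T unfolding c_def inv_on_def by auto
        have T2: "c (insert k T) k = inverse (b k)" for T unfolding c_def inv_on_def by auto
        have z1: "(\<Prod>j\<in>B. 1 - c T j * x) = 0" if "c T k * x = 1" for T
          using that k fB by (auto simp: prod_zero_iff)
        show ?thesis
        proof (cases "x = b k")
          case True
          have "poly Q x = (\<Sum>T\<in>Pow (B - {k}). Kf A' B a (c T) * (\<Prod>j\<in>B. 1 - c T j * c T k))
              + (\<Sum>T\<in>Pow (B - {k}). Kf A' B a (c (insert k T)) * (\<Prod>j\<in>B. 1 - c (insert k T) j * x))"
            unfolding polyQ splitB[OF k] using True T1 by (intro arg_cong2[where f="(+)"] sum.cong) auto
          also have "(\<Sum>T\<in>Pow (B - {k}). Kf A' B a (c (insert k T)) * (\<Prod>j\<in>B. 1 - c (insert k T) j * x)) = 0"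
            using z1 T2 True bk0 by (intro sum.neutral) auto
          also have "(\<Sum>T\<in>Pow (B - {k}). Kf A' B a (c T) * (\<Prod>j\<in>B. 1 - c T j * c T k))
                = (\<Sum>T\<in>Pow (B - {k}). Kf A' (B - {k}) a (c T) * (\<Prod>i\<in>A'. 1 - a i * x))"
          proof (intro sum.cong refl)
            fix T assume "T \<in> Pow (B - {k})"
            then show "Kf A' B a (c T) * (\<Prod>j\<in>B. 1 - c T j * c T k) = Kf A' (B - {k}) a (c T) * (\<Prod>i\<in>A'. 1 - a i * x)"
              using ev[OF k, of T] T1[of T] True by simp
          qed
          also have "\<dots> = (\<Prod>i\<in>A'. 1 - a i * x)"
            using IH[OF k] by (simp add: sum_distrib_right[symmetric])
          finally show ?thesis using polyR by simp
        next
          case False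
          then have xi: "x = inverse (b k)" using xk by auto
          have "poly Q x = (\<Sum>T\<in>Pow (B - {k}). Kf A' B a (c T) * (\<Prod>j\<in>B. 1 - c T j * x))
              + (\<Sum>T\<in>Pow (B - {k}). Kf A' B a (c (insert k T)) * (\<Prod>j\<in>B. 1 - c (insert k T) j * c (insert k T) k))"
            unfolding polyQ splitB[OF k] using xi T2 by (intro arg_cong2[where f="(+)"] sum.cong) auto
          also have "(\<Sum>T\<in>Pow (B - {k}). Kf A' B a (c T) * (\<Prod>j\<in>B. 1 - c T j * x)) = 0"
            using z1 T1 xi bk0 by (intro sum.neutral) auto
          also have "(\<Sum>T\<in>Pow (B - {k}). Kf A' B a (c (insert k T)) * (\<Prod>j\<in>B. 1 - c (insert k T) j * c (insert k T) k))
                = (\<Sum>T\<in>Pow (B - {k}). Kf A' (B - {k}) a (c T) * (\<Prod>i\<in>A'. 1 - a i * x))"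
          proof (intro sum.cong refl)
            fix T assume "T \<in> Pow (B - {k})"
            have "Kf A' (B - {k}) a (c (insert k T)) = Kf A' (B - {k}) a (c T)"
              by (rule Kf_cong) (auto simp: cins)
            then show "Kf A' B a (c (insert k T)) * (\<Prod>j\<in>B. 1 - c (insert k T) j * c (insert k T) k)
                = Kf A' (B - {k}) a (c T) * (\<Prod>i\<in>A'. 1 - a i * x)"
              using ev[OF k, of "insert k T"] T2 xi by simp
          qed
          also have "\<dots> = (\<Prod>i\<in>A'. 1 - a i * x)"
            using IH[OF k] by (simp add: sum_distrib_right[symmetric])
          finally show ?thesis using polyR by simp
        qed
      qed
      have cardP: "card (b ` B \<union> (\<lambda>j. inverse (b j)) ` B) = 2 * card B"
      proof -
        have inj1: "inj_on b B" using hb unfolding HB_def inj_on_def by blast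
        have inj2: "inj_on (\<lambda>j. inverse (b j)) B" using inj1 unfolding inj_on_def by auto
        have disj: "b ` B \<inter> (\<lambda>j. inverse (b j)) ` B = {}"
        proof (rule ccontr)
          assume "b ` B \<inter> (\<lambda>j. inverse (b j)) ` B \<noteq> {}"
          then obtain i j where ij: "i \<in> B" "j \<in> B" "b i = inverse (b j)" by auto
          then have bb: "b i * b j = 1" using hb by (auto simp: HB_def)
          show False using hb ij(1,2) bb by (cases "i = j") (auto simp: HB_def)
        qed
        show ?thesis using card_Un_disjoint[OF _ _ disj] card_image[OF inj1] card_image[OF inj2] fB by simp
      qed
      have QR: "Q = R"
      proof (rule poly_eqI_degree[OF val])
        have "degree Q \<le> card B" unfolding Q_def
          by (rule degree_sum_smult_le) (use fB degree_lin_prod in auto)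
        then show "degree Q < card (b ` B \<union> (\<lambda>j. inverse (b j)) ` B)" using cardP cB by simp
        have "degree R \<le> card A'" unfolding R_def using degree_lin_prod[OF fA'] by simp
        then show "degree R < card (b ` B \<union> (\<lambda>j. inverse (b j)) ` B)" using cardP cB cA' by simp
      qed
      have split: "Kf A B a (c T) = Kf A' B a (c T) * (\<Prod>j\<in>B. 1 - c T j * a m) / (\<Prod>i\<in>A'. 1 - a m * a i)" for T
      proof -
        have e1: "Cf A B a (c T) = Cf A' B a (c T) * (\<Prod>j\<in>B. 1 - c T j * a m)"
          using Cf_removeA[OF fA m] by (simp add: A'_def mult.commute)
        have e2: "Da A a = Da A' a * (\<Prod>i\<in>A'. 1 - a m * a i)"
          using Da_remove[OF fA m] by (simp add: A'_def)
        show ?thesis unfolding Kf_def e1 e2 by (simp add: field_simps)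
      qed
      have "(\<Sum>T\<in>Pow B. Kf A B a (c T)) = poly Q (a m) / (\<Prod>i\<in>A'. 1 - a m * a i)"
        unfolding polyQ split by (simp add: sum_divide_distrib)
      also have "\<dots> = 1" using QR polyR pm by (simp add: mult.commute)
      finally show ?thesis .
    qed
    show "(\<Sum>T\<in>Pow B. Kf A B a (inv_on T b)) = 1"
    proof (cases "A = {}")
      case False
      then show ?thesis using main[OF False fA cA ha] by (simp add: c_def)
    next
      case True
      have "Kf A B a (c T) = Kf {0} B (\<lambda>_. 0) (c T)" for T
        using True by (simp add: Kf_def Cf_def Da_def pprod_def)
      moreover have "(\<Sum>T\<in>Pow B. Kf {0} B (\<lambda>_. 0) (c T)) = 1"
        by (rule main) auto
      ultimately show ?thesis by (simp add: c_def)
    qed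
  qed
qed

definition HA :: "nat set \<Rightarrow> (nat \<Rightarrow> complex) \<Rightarrow> bool" where
  "HA A a \<longleftrightarrow> (\<forall>j\<in>A. a j \<noteq> 0) \<and> (\<forall>i\<in>A. \<forall>j\<in>A. i \<noteq> j \<longrightarrow> a i \<noteq> a j \<and> a i * a j \<noteq> 1)"

lemma HA_inv:
  assumes "HA A a" "i \<in> A" "j \<in> A" "i \<noteq> j"
  shows "inv_on S a i * inv_on S a j \<noteq> 1"
proof -
  have h: "a i \<noteq> 0" "a j \<noteq> 0" "a i \<noteq> a j" "a i * a j \<noteq> 1" using assms unfolding HA_def by auto
  show ?thesis unfolding inv_on_def using h by (auto simp: field_simps)
qed

lemma HA_sub: "HA A a \<Longrightarrow> A' \<subseteq> A \<Longrightarrow> HA A' a"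
  unfolding HA_def by blast

lemma HA_Da: "finite A \<Longrightarrow> HA A a \<Longrightarrow> Da A (inv_on S a) \<noteq> 0"
  by (rule Da_nz) (auto dest: HA_inv)

definition Ev :: "nat set \<Rightarrow> nat set set" where "Ev A = {S. S \<subseteq> A \<and> even (card S)}"
definition Od :: "nat set \<Rightarrow> nat set set" where "Od A = {S. S \<subseteq> A \<and> odd (card S)}"

lemma sum_Ev_insert:
  assumes "finite B" "k \<notin> B"
  shows "(\<Sum>S\<in>Ev (insert k B). f S) = (\<Sum>S\<in>Ev B. f S) + (\<Sum>S\<in>Od B. f (insert k S))"
proof -
  have fin: "finite (Ev B)" "finite (Od B)" using assms by (auto simp: Ev_def Od_def)
  have cins: "S \<subseteq> B \<Longrightarrow> card (insert k S) = Suc (card S)" for S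
    using assms by (meson card_insert_disjoint finite_subset subsetD)
  have eq: "Ev (insert k B) = Ev B \<union> insert k ` Od B"
  proof
    show "Ev (insert k B) \<subseteq> Ev B \<union> insert k ` Od B"
    proof
      fix S assume S: "S \<in> Ev (insert k B)"
      show "S \<in> Ev B \<union> insert k ` Od B"
      proof (cases "k \<in> S")
        case True
        then have "S = insert k (S - {k})" "S - {k} \<subseteq> B" using S by (auto simp: Ev_def)
        then have "S - {k} \<in> Od B" using S cins[of "S - {k}"] by (auto simp: Ev_def Od_def)
        then show ?thesis using \<open>S = insert k (S - {k})\<close> by blast
      next
        case False
        then show ?thesis using S by (auto simp: Ev_def)
      qed
    qed
    show "Ev B \<union> insert k ` Od B \<subseteq> Ev (insert k B)"
      using cins by (auto simp: Ev_def Od_def)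
  qed
  have "(\<Sum>S\<in>Ev (insert k B). f S) = (\<Sum>S\<in>Ev B. f S) + (\<Sum>S\<in>insert k ` Od B. f S)"
    unfolding eq using assms fin by (intro sum.union_disjoint) (auto simp: Ev_def Od_def)
  also have "(\<Sum>S\<in>insert k ` Od B. f S) = (\<Sum>S\<in>Od B. f (insert k S))"
    using assms by (subst sum.reindex) (auto simp: inj_on_def Od_def)
  finally show ?thesis .
qed

lemma sum_Od_flip:
  assumes "finite B" "l \<in> B"
  shows "(\<Sum>S\<in>Od B. f (inv_on S a)) = (\<Sum>S\<in>Ev B. f (inv_on S (a(l := inverse (a l)))))"
proof -
  define h where "h S = (if l \<in> S then S - {l} else insert l S)" for S
  have inv: "inv_on S a = inv_on (h S) (a(l := inverse (a l)))" for S
    unfolding inv_on_def h_def by (auto simp: fun_eq_iff)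
  have ch: "S \<subseteq> B \<Longrightarrow> odd (card S) \<longleftrightarrow> even (card (h S))" for S
  proof -
    assume "S \<subseteq> B"
    then have fS: "finite S" using assms finite_subset by auto
    show ?thesis
    proof (cases "l \<in> S")
      case True
      then have "card S = Suc (card (S - {l}))" using fS by (metis card_Suc_Diff1)
      then show ?thesis using True by (simp add: h_def)
    next
      case False
      then show ?thesis using fS by (simp add: h_def)
    qed
  qed
  have hh: "h (h S) = S" for S unfolding h_def by auto
  have hB: "S \<subseteq> B \<Longrightarrow> h S \<subseteq> B" for S using assms unfolding h_def by auto
  have bij: "bij_betw h (Od B) (Ev B)"
  proof (rule bij_betw_byWitness[where f' = h])
    show "\<forall>a\<in>Od B. h (h a) = a" "\<forall>a\<in>Ev B. h (h a) = a" using hh by auto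
    show "h ` Od B \<subseteq> Ev B" using ch hB by (auto simp: Od_def Ev_def)
    show "h ` Ev B \<subseteq> Od B"
    proof
      fix S assume "S \<in> h ` Ev B"
      then obtain T where T: "T \<in> Ev B" "S = h T" by auto
      then have "h S = T" "S \<subseteq> B" using hh hB by (auto simp: Ev_def)
      then show "S \<in> Od B" using ch[of S] T by (auto simp: Ev_def Od_def)
    qed
  qed
  show ?thesis unfolding inv using sum.reindex_bij_betw[OF bij, of "\<lambda>S. f (inv_on S (a(l := inverse (a l))))"]
    by simp
qed

lemma HA_flip:
  assumes "HA A a" "l \<in> A" shows "HA A (a(l := inverse (a l)))"
  unfolding HA_def
proof (intro conjI ballI impI)
  fix j assume "j \<in> A" then show "(a(l := inverse (a l))) j \<noteq> 0" using assms by (auto simp: HA_def)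
next
  fix i j assume ij: "i \<in> A" "j \<in> A" "i \<noteq> j"
  have h: "a i \<noteq> 0" "a j \<noteq> 0" "a i \<noteq> a j" "a i * a j \<noteq> 1" using assms ij unfolding HA_def by auto
  show "(a(l := inverse (a l))) i \<noteq> (a(l := inverse (a l))) j"
    using h ij by (cases "i = l"; cases "j = l") (auto simp: field_simps)
  show "(a(l := inverse (a l))) i * (a(l := inverse (a l))) j \<noteq> 1"
    using h ij by (cases "i = l"; cases "j = l") (auto simp: field_simps)
qed

lemma card_pts:
  assumes fA: "finite A" and ha: "HA A a"
  shows "card (a ` A \<union> (\<lambda>i. inverse (a i)) ` A) + 2 \<ge> 2 * card A"
proof -
  define G where "G = {k\<in>A. a k * a k \<noteq> 1}"
  have inj1: "inj_on a A" using ha unfolding HA_def inj_on_def by blast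
  have inj2: "inj_on (\<lambda>i. inverse (a i)) G" using inj1 unfolding inj_on_def G_def by auto
  have disj: "a ` A \<inter> (\<lambda>i. inverse (a i)) ` G = {}"
  proof (rule ccontr)
    assume "a ` A \<inter> (\<lambda>i. inverse (a i)) ` G \<noteq> {}"
    then obtain i j where ij: "i \<in> A" "j \<in> G" "a i = inverse (a j)" by auto
    then have bb: "a i * a j = 1" using ha by (auto simp: HA_def G_def)
    show False using ha ij(1,2) bb by (cases "i = j") (auto simp: HA_def G_def)
  qed
  have fG: "finite G" using fA by (simp add: G_def)
  have c1: "card (a ` A \<union> (\<lambda>i. inverse (a i)) ` G) = card A + card G"
    using card_Un_disjoint[OF _ _ disj] card_image[OF inj1] card_image[OF inj2] fA fG by simp
  have c2: "card (a ` A \<union> (\<lambda>i. inverse (a i)) ` G) \<le> card (a ` A \<union> (\<lambda>i. inverse (a i)) ` A)"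
    by (rule card_mono) (use fA G_def in auto)
  have "card (A - G) \<le> card {1, -1::complex}"
  proof (rule card_inj_on_le)
    show "inj_on a (A - G)" using inj1 by (auto simp: inj_on_def)
    show "a ` (A - G) \<subseteq> {1, -1}"
    proof
      fix z assume "z \<in> a ` (A - G)"
      then have "z * z = 1" by (auto simp: G_def)
      then have "(z - 1) * (z + 1) = 0" by (simp add: algebra_simps)
      then show "z \<in> {1, -1}" by (auto simp: eq_neg_iff_add_eq_0)
    qed
  qed simp
  then have "card (A - G) \<le> 2" by simp
  moreover have "card A = card G + card (A - G)"
  proof -
    have Gs: "G \<subseteq> A" by (auto simp: G_def)
    show ?thesis using card_Diff_subset[OF fG Gs] card_mono[OF fA Gs] by simp
  qed
  ultimately show ?thesis using c1 c2 by linarith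
qed

lemma Ev_two: "p \<noteq> q \<Longrightarrow> Ev {p, q} = {{}, {p, q}}"
proof -
  assume pq: "p \<noteq> q"
  have "Pow {p, q} = {{}, {p}, {q}, {p, q}}" by (auto simp: Pow_insert)
  moreover have "Ev {p,q} = {S \<in> Pow {p,q}. even (card S)}" by (auto simp: Ev_def)
  ultimately show ?thesis using pq by auto
qed

lemma Kf_two:
  assumes "p \<noteq> q"
  shows "Kf {p, q} {r} c b = (1 - c p * b r) * (1 - c q * b r) / ((1 - c p * c q) * (1 - b r * b r))"
proof -
  have "Da {p, q} c = Da {q} c * (1 - c p * c q)"
    using Da_remove[of "{p,q}" p c] assms by (simp add: insert_Diff_if)
  moreover have "Da {q} c = 1" by (rule Da_le1) auto
  moreover have "Db {r} b = 1 - b r * b r"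
  proof -
    have "Db {r} b = Da {r} b * (1 - b r * b r)" by (simp add: Db_def Da_def)
    moreover have "Da {r} b = 1" by (rule Da_le1) auto
    ultimately show ?thesis by simp
  qed
  moreover have "Cf {p, q} {r} c b = (1 - c p * b r) * (1 - c q * b r)" using assms by (simp add: Cf_def)
  ultimately show ?thesis by (simp add: Kf_def)
qed

lemma X_two:
  assumes "p \<noteq> q" "HA {p, q} a" "b r * b r \<noteq> 1"
  shows "(\<Sum>S\<in>Ev {p, q}. Kf {p, q} {r} (inv_on S a) b) = 1"
proof -
  have h: "a p \<noteq> 0" "a q \<noteq> 0" "a p * a q \<noteq> 1" using assms unfolding HA_def by auto
  have ne: "{} \<noteq> {p, q}" by auto
  have "(\<Sum>S\<in>Ev {p, q}. Kf {p, q} {r} (inv_on S a) b)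
      = Kf {p, q} {r} (inv_on {} a) b + Kf {p, q} {r} (inv_on {p, q} a) b"
    unfolding Ev_two[OF assms(1)] using ne by simp
  also have "\<dots> = (1 - a p * b r) * (1 - a q * b r) / ((1 - a p * a q) * (1 - b r * b r))
      + (1 - inverse (a p) * b r) * (1 - inverse (a q) * b r) / ((1 - inverse (a p) * inverse (a q)) * (1 - b r * b r))"
    unfolding Kf_two[OF assms(1)] by (simp add: inv_on_def)
  also have "\<dots> = 1"
  proof -
    define P where "P = a p" define Q where "Q = a q" define R where "R = b r"
    have P: "P \<noteq> 0" and Q: "Q \<noteq> 0" and PQ: "1 - P * Q \<noteq> 0" and R: "1 - R * R \<noteq> 0"
      using h assms(3) by (auto simp: P_def Q_def R_def)
    have PQ': "P * Q - 1 \<noteq> 0" using PQ by (auto simp: algebra_simps)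
    have "(1 - P * R) * (1 - Q * R) / ((1 - P * Q) * (1 - R * R))
      + (1 - inverse P * R) * (1 - inverse Q * R) / ((1 - inverse P * inverse Q) * (1 - R * R)) = 1"
    proof -
      have e2: "(1 - inverse P * R) * (1 - inverse Q * R) / ((1 - inverse P * inverse Q) * (1 - R * R))
          = (P - R) * (Q - R) / ((P * Q - 1) * (1 - R * R))"
      proof -
        have i1: "1 - inverse P * R = (P - R) / P" using P by (simp add: field_simps)
        have i2: "1 - inverse Q * R = (Q - R) / Q" using Q by (simp add: field_simps)
        have i3: "1 - inverse P * inverse Q = (P * Q - 1) / (P * Q)" using P Q by (simp add: field_simps)
        have g: "\<And>x y z w. (x/P * (y/Q)) / (z/(P*Q) * w) = x*y/(z*w)"
          subgoal for x y z w using P Q by (cases "z * w = 0") (auto simp: field_simps)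
          done
        show ?thesis unfolding i1 i2 i3 by (rule g)
      qed
      have e3: "(P - R) * (Q - R) / ((P * Q - 1) * (1 - R * R)) = - ((P - R) * (Q - R)) / ((1 - P * Q) * (1 - R * R))"
      proof -
        have "(P * Q - 1) * (1 - R * R) = - ((1 - P * Q) * (1 - R * R))" by (simp add: algebra_simps)
        then show ?thesis by (simp only: divide_minus_right minus_divide_left)
      qed
      have e4: "(1 - P * R) * (1 - Q * R) - (P - R) * (Q - R) = (1 - P * Q) * (1 - R * R)"
        by (simp add: algebra_simps)
      show ?thesis unfolding e2 e3
        using PQ R e4 by (simp add: add_divide_distrib[symmetric] diff_divide_distrib[symmetric])
    qed
    then show ?thesis by (simp add: P_def Q_def R_def)
  qed
  finally show ?thesis .
qed

lemma X_main:
  "\<forall>A B a b. card B = n \<longrightarrow> finite A \<longrightarrow> finite B \<longrightarrow> card A = card B + 1 \<longrightarrow>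
     HA A a \<longrightarrow> (\<forall>i\<in>B. \<forall>j\<in>B. b i * b j \<noteq> 1) \<longrightarrow>
     (\<Sum>S\<in>Ev A. Kf A B (inv_on S a) b) = 1"
proof (induction n)
  case 0
  show ?case
  proof (intro allI impI)
    fix A B :: "nat set" and a b :: "nat \<Rightarrow> complex"
    assume h: "card B = 0" "finite A" "finite B" "card A = card B + 1"
    then have B: "B = {}" by simp
    obtain p where p: "A = {p}" using h by (auto simp: card_Suc_eq)
    have E: "Ev A = {{}}" unfolding p Ev_def by (auto simp: subset_singleton_iff)
    have "Da A a = 1" using h by (intro Da_le1) auto
    then show "(\<Sum>S\<in>Ev A. Kf A B (inv_on S a) b) = 1"
      using B E p by (simp add: Kf_def Cf_def Db_def pprod_def Da_le1)
  qed
next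
  case (Suc n)
  show ?case
  proof (intro allI impI)
    fix A B :: "nat set" and a b :: "nat \<Rightarrow> complex"
    assume cB: "card B = Suc n" and fA: "finite A" and fB: "finite B" and cA: "card A = card B + 1"
      and ha: "HA A a" and hb: "\<forall>i\<in>B. \<forall>j\<in>B. b i * b j \<noteq> 1"
    show "(\<Sum>S\<in>Ev A. Kf A B (inv_on S a) b) = 1"
    proof (cases n)
      case 0
      obtain r where r: "B = {r}" using cB 0 by (auto simp: card_Suc_eq)
      obtain p q where pq: "A = {p, q}" "p \<noteq> q" using cA cB 0 by (auto simp: card_Suc_eq numeral_2_eq_2)
      show ?thesis unfolding r pq(1) by (rule X_two) (use pq ha hb r in auto)
    next
      case (Suc n')
      have cA3: "card A \<ge> 3" using cA cB Suc by simp
      obtain k0 where k0: "k0 \<in> B" using cB by (auto simp: card_Suc_eq)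
      define B' where "B' = B - {k0}"
      define w0 where "w0 = b k0"
      have fB': "finite B'" using fB by (simp add: B'_def)
      have cB': "card B' = n" using cB k0 fB by (simp add: B'_def)
      define c where "c S = inv_on S a" for S
      have DbB': "Db B' b \<noteq> 0" using hb fB' by (intro Db_nz) (auto simp: B'_def)
      have pw: "(\<Prod>j\<in>B'. 1 - w0 * b j) * (1 - w0 * w0) \<noteq> 0"
        using hb k0 fB' by (auto simp: B'_def w0_def prod_zero_iff)
      have ev: "Kf A B' (c S) b * (\<Prod>i\<in>A. 1 - c S i * c S k) = Kf (A - {k}) B' (c S) b * ((1 - c S k * c S k) * (\<Prod>j\<in>B'. 1 - c S k * b j))"
        if k: "k \<in> A" for S k
      proof (rule EVa[OF fA fB' k refl _ DbB'])
        show "Da (A - {k}) (c S) \<noteq> 0" unfolding c_def using HA_Da[OF _ HA_sub[OF ha]] fA by auto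
        show "(\<Prod>i\<in>A - {k}. 1 - c S k * c S i) \<noteq> 0" unfolding c_def using HA_inv[OF ha k] fA
          by (auto simp: prod_zero_iff)
      qed
      have IH: "(\<Sum>S\<in>Ev (A - {k}). Kf (A - {k}) B' (inv_on S a') b) = 1" if k: "k \<in> A" and ha': "HA (A - {k}) a'" for k a'
        using Suc.IH[rule_format, of B' "A - {k}" a' b] k cB' fA fB' cA cB ha' hb
        by (auto simp: B'_def)
      define P where "P = (\<Sum>S\<in>Ev A. smult (Kf A B' (c S) b) (\<Prod>i\<in>A. [:1, - (c S i):]))"
      define R where "R = (\<Prod>j\<in>B'. [:1, - (b j):]) * [:1, 0, -1:]"
      have polyP: "poly P x = (\<Sum>S\<in>Ev A. Kf A B' (c S) b * (\<Prod>i\<in>A. 1 - c S i * x))" for x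
        unfolding P_def by (simp add: poly_sum poly_lin_prod)
      have polyR: "poly R x = (1 - x * x) * (\<Prod>j\<in>B'. 1 - x * b j)" for x
        unfolding R_def poly_mult poly_lin_prod by (simp add: algebra_simps)
      have splitA: "(\<Sum>S\<in>Ev A. f S) = (\<Sum>S\<in>Ev (A - {k}). f S) + (\<Sum>S\<in>Od (A - {k}). f (insert k S))"
        if k: "k \<in> A" for k and f :: "nat set \<Rightarrow> complex"
        using sum_Ev_insert[of "A - {k}" k f] fA k by (simp add: insert_absorb)
      have cins: "c (insert k S) j = c S j" if "j \<noteq> k" for k S j
        unfolding c_def using that by (rule inv_on_insert)
      have val: "poly P x = poly R x" if x: "x \<in> a ` A \<union> (\<lambda>i. inverse (a i)) ` A" for x
      proof -
        obtain k where k: "k \<in> A" and xk: "x = a k \<or> x = inverse (a k)" using x by auto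
        have ak0: "a k \<noteq> 0" using ha k by (auto simp: HA_def)
        have T1: "S \<subseteq> A - {k} \<Longrightarrow> c S k = a k" for S unfolding c_def inv_on_def by auto
        have T2: "c (insert k S) k = inverse (a k)" for S unfolding c_def inv_on_def by auto
        have z1: "(\<Prod>i\<in>A. 1 - c S i * x) = 0" if "c S k * x = 1" for S
          using that k fA by (auto simp: prod_zero_iff)
        have haA: "HA (A - {k}) a" using HA_sub[OF ha] by auto
        show ?thesis
        proof (cases "x = a k")
          case True
          have "poly P x = (\<Sum>S\<in>Ev (A - {k}). Kf A B' (c S) b * (\<Prod>i\<in>A. 1 - c S i * c S k))
              + (\<Sum>S\<in>Od (A - {k}). Kf A B' (c (insert k S)) b * (\<Prod>i\<in>A. 1 - c (insert k S) i * x))"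
            unfolding polyP splitA[OF k] using True T1 by (intro arg_cong2[where f="(+)"] sum.cong) (auto simp: Ev_def)
          also have "(\<Sum>S\<in>Od (A - {k}). Kf A B' (c (insert k S)) b * (\<Prod>i\<in>A. 1 - c (insert k S) i * x)) = 0"
            using z1 T2 True ak0 by (intro sum.neutral) auto
          also have "(\<Sum>S\<in>Ev (A - {k}). Kf A B' (c S) b * (\<Prod>i\<in>A. 1 - c S i * c S k))
                = (\<Sum>S\<in>Ev (A - {k}). Kf (A - {k}) B' (c S) b * ((1 - x * x) * (\<Prod>j\<in>B'. 1 - x * b j)))"
          proof (intro sum.cong refl)
            fix S assume "S \<in> Ev (A - {k})"
            then show "Kf A B' (c S) b * (\<Prod>i\<in>A. 1 - c S i * c S k) = Kf (A - {k}) B' (c S) b * ((1 - x * x) * (\<Prod>j\<in>B'. 1 - x * b j))"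
              using ev[OF k, of S] T1[of S] True by (simp add: Ev_def)
          qed
          also have "\<dots> = (1 - x * x) * (\<Prod>j\<in>B'. 1 - x * b j)"
            using IH[OF k haA] by (simp add: sum_distrib_right[symmetric] c_def)
          finally show ?thesis using polyR by simp
        next
          case False
          then have xi: "x = inverse (a k)" using xk by auto
          have "poly P x = (\<Sum>S\<in>Ev (A - {k}). Kf A B' (c S) b * (\<Prod>i\<in>A. 1 - c S i * x))
              + (\<Sum>S\<in>Od (A - {k}). Kf A B' (c (insert k S)) b * (\<Prod>i\<in>A. 1 - c (insert k S) i * c (insert k S) k))"
            unfolding polyP splitA[OF k] using xi T2 by (intro arg_cong2[where f="(+)"] sum.cong) auto
          also have "(\<Sum>S\<in>Ev (A - {k}). Kf A B' (c S) b * (\<Prod>i\<in>A. 1 - c S i * x)) = 0"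
            using z1 T1 xi ak0 by (intro sum.neutral) (auto simp: Ev_def)
          also have "(\<Sum>S\<in>Od (A - {k}). Kf A B' (c (insert k S)) b * (\<Prod>i\<in>A. 1 - c (insert k S) i * c (insert k S) k))
                = (\<Sum>S\<in>Od (A - {k}). Kf (A - {k}) B' (inv_on S a) b * ((1 - x * x) * (\<Prod>j\<in>B'. 1 - x * b j)))"
          proof (intro sum.cong refl)
            fix S assume "S \<in> Od (A - {k})"
            have "Kf (A - {k}) B' (c (insert k S)) b = Kf (A - {k}) B' (c S) b"
              by (rule Kf_cong) (auto simp: cins)
            then show "Kf A B' (c (insert k S)) b * (\<Prod>i\<in>A. 1 - c (insert k S) i * c (insert k S) k)
                = Kf (A - {k}) B' (inv_on S a) b * ((1 - x * x) * (\<Prod>j\<in>B'. 1 - x * b j))"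
              using ev[OF k, of "insert k S"] T2 xi by (simp add: c_def)
          qed
          also have "(\<Sum>S\<in>Od (A - {k}). Kf (A - {k}) B' (inv_on S a) b) = 1"
          proof -
            have "card (A - {k}) \<ge> 2" using cA3 k fA by simp
            then obtain l where l: "l \<in> A - {k}" by (metis all_not_in_conv card.empty not_numeral_le_zero)
            have "(\<Sum>S\<in>Od (A - {k}). Kf (A - {k}) B' (inv_on S a) b)
                = (\<Sum>S\<in>Ev (A - {k}). Kf (A - {k}) B' (inv_on S (a(l := inverse (a l)))) b)"
              by (rule sum_Od_flip) (use fA l in auto)
            also have "\<dots> = 1" by (rule IH[OF k HA_flip[OF haA l]])
            finally show ?thesis .
          qed
          then have "(\<Sum>S\<in>Od (A - {k}). Kf (A - {k}) B' (inv_on S a) b * ((1 - x * x) * (\<Prod>j\<in>B'. 1 - x * b j)))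
               = (1 - x * x) * (\<Prod>j\<in>B'. 1 - x * b j)"
            by (simp add: sum_distrib_right[symmetric])
          finally show ?thesis using polyR by simp
        qed
      qed
      have PR: "P = R"
      proof (rule poly_eqI_degree[OF val])
        have cp: "card (a ` A \<union> (\<lambda>i. inverse (a i)) ` A) + 2 \<ge> 2 * card A" by (rule card_pts[OF fA ha])
        have "degree P \<le> card A" unfolding P_def
          by (rule degree_sum_smult_le) (use fA degree_lin_prod in \<open>auto simp: Ev_def\<close>)
        then show "degree P < card (a ` A \<union> (\<lambda>i. inverse (a i)) ` A)" using cp cA3 by simp
        have "degree R \<le> card B' + 2" unfolding R_def
          using degree_mult_le[of "\<Prod>j\<in>B'. [:1, - (b j):]" "[:1, 0, -1:]"] degree_lin_prod[OF fB', of b]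
          by (simp add: numeral_2_eq_2)
        then show "degree R < card (a ` A \<union> (\<lambda>i. inverse (a i)) ` A)" using cp cA3 cA cB cB' by simp
      qed
      have split: "Kf A B (c S) b = Kf A B' (c S) b * (\<Prod>i\<in>A. 1 - c S i * w0) / ((\<Prod>j\<in>B'. 1 - w0 * b j) * (1 - w0 * w0))" for S
      proof -
        have e1: "Cf A B (c S) b = Cf A B' (c S) b * (\<Prod>i\<in>A. 1 - c S i * w0)"
          using Cf_removeB[OF fB k0] by (simp add: B'_def w0_def)
        have e2: "Db B b = Db B' b * ((\<Prod>j\<in>B'. 1 - w0 * b j) * (1 - w0 * w0))"
          using Db_remove[OF fB k0] by (simp add: B'_def w0_def mult_ac)
        show ?thesis unfolding Kf_def e1 e2 by (simp add: field_simps)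
      qed
      have "(\<Sum>S\<in>Ev A. Kf A B (c S) b) = poly P w0 / ((\<Prod>j\<in>B'. 1 - w0 * b j) * (1 - w0 * w0))"
        unfolding polyP split by (simp add: sum_divide_distrib)
      also have "\<dots> = 1" using PR polyR pw by (simp add: mult.commute)
      finally show ?thesis by (simp add: c_def)
    qed
  qed
qed

lemma inv_aux: "inverse (x - y) * (0 - y) = y / (y - x)" for x y :: complex
  by (cases "x = y") (simp_all add: field_simps)

lemma lagrange_one:
  fixes z :: "nat \<Rightarrow> complex"
  assumes fA: "finite A" and ne: "A \<noteq> {}" and inj: "inj_on z A"
  shows "(\<Sum>b\<in>A. \<Prod>k\<in>A-{b}. z k / (z k - z b)) = 1"
proof -
  define L where "L = (\<Sum>b\<in>A. smult (\<Prod>k\<in>A-{b}. inverse (z b - z k)) (\<Prod>k\<in>A-{b}. [:- z k, 1:]))"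
  have polyL: "poly L t = (\<Sum>b\<in>A. (\<Prod>k\<in>A-{b}. inverse (z b - z k)) * (\<Prod>k\<in>A-{b}. t - z k))" for t
    unfolding L_def by (simp add: poly_sum poly_prod)
  have val: "poly L t = poly 1 t" if t: "t \<in> z ` A" for t
  proof -
    obtain l where l: "l \<in> A" "t = z l" using t by auto
    have "poly L t = (\<Prod>k\<in>A-{l}. inverse (z l - z k)) * (\<Prod>k\<in>A-{l}. z l - z k)
       + (\<Sum>b\<in>A-{l}. (\<Prod>k\<in>A-{b}. inverse (z b - z k)) * (\<Prod>k\<in>A-{b}. z l - z k))"
      unfolding polyL l(2) using sum.remove[OF fA l(1)] by simp
    also have "(\<Sum>b\<in>A-{l}. (\<Prod>k\<in>A-{b}. inverse (z b - z k)) * (\<Prod>k\<in>A-{b}. z l - z k)) = 0"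
      using fA l(1) by (intro sum.neutral) (auto simp: prod_zero_iff)
    also have "(\<Prod>k\<in>A-{l}. inverse (z l - z k)) * (\<Prod>k\<in>A-{l}. z l - z k) = (\<Prod>k\<in>A-{l}. 1)"
      unfolding prod.distrib[symmetric]
    proof (intro prod.cong refl)
      fix k assume "k \<in> A - {l}"
      then have "z l - z k \<noteq> 0" using inj l(1) by (auto simp: inj_on_def)
      then show "inverse (z l - z k) * (z l - z k) = 1" by simp
    qed
    finally show ?thesis by simp
  qed
  have cA: "card (z ` A) = card A" using card_image[OF inj] .
  have "L = 1"
  proof (rule poly_eqI_degree[OF val])
    have "degree L \<le> card A - 1" unfolding L_def
    proof (rule degree_sum_le[OF fA])
      fix b assume b: "b \<in> A"
      have "degree (\<Prod>k\<in>A-{b}. [:- z k, 1:]) \<le> (\<Sum>k\<in>A-{b}. degree [:- z k, (1::complex):])"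
        using degree_prod_sum_le[of "A - {b}" "\<lambda>k. [:- z k, 1:]"] fA by (simp add: o_def)
      also have "\<dots> = card (A - {b})" by simp
      finally show "degree (smult (\<Prod>k\<in>A-{b}. inverse (z b - z k)) (\<Prod>k\<in>A-{b}. [:- z k, 1:])) \<le> card A - 1"
 
        using b fA degree_smult_le[of "\<Prod>k\<in>A-{b}. inverse (z b - z k)" "\<Prod>k\<in>A-{b}. [:- z k, 1:]"]
        by (simp add: card_Diff_singleton)
    qed
    then show "degree L < card (z ` A)" using cA ne fA by (metis card_gt_0_iff diff_less le_less_trans zero_less_one)
    show "degree (1::complex poly) < card (z ` A)" using cA ne fA by (simp add: card_gt_0_iff)
  qed
  then have "poly L 0 = 1" by simp
  moreover have "poly L 0 = (\<Sum>b\<in>A. \<Prod>k\<in>A-{b}. z k / (z k - z b))"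
    unfolding polyL prod.distrib[symmetric]
    unfolding polyL prod.distrib[symmetric] inv_aux by (rule refl)
  ultimately show ?thesis by simp
qed

lemma pprod_remove_max:
  assumes fA: "finite A" and M: "M \<in> A" and mx: "\<And>i. i \<in> A \<Longrightarrow> i \<le> M"
  shows "pprod g A = pprod g (A - {M}) * (\<Prod>i\<in>A-{M}. g i M)"
proof -
  have "pprod g A = (\<Prod>j\<in>{j\<in>A. M<j}. g M j) * (\<Prod>i\<in>A-{M}. \<Prod>j\<in>{j\<in>A. i<j}. g i j)"
    unfolding pprod_def using prod.remove[OF fA M] by simp
  also have "{j\<in>A. M<j} = {}" using mx by force
  also have "(\<Prod>i\<in>A-{M}. \<Prod>j\<in>{j\<in>A. i<j}. g i j) = (\<Prod>i\<in>A-{M}. g i M * (\<Prod>j\<in>{j\<in>A-{M}. i<j}. g i j))"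
  proof (intro prod.cong refl)
    fix i assume i: "i \<in> A - {M}"
    then have "i < M" using mx by force
    then have "{j\<in>A. i<j} = insert M {j\<in>A-{M}. i<j}" using M by auto
    then show "(\<Prod>j\<in>{j\<in>A. i<j}. g i j) = g i M * (\<Prod>j\<in>{j\<in>A-{M}. i<j}. g i j)"
      using fA by simp
  qed
  finally show ?thesis unfolding pprod_def by (simp add: prod.distrib mult.commute)
qed

lemma transpose_image_Diff:
  assumes "b \<in> A" "M \<in> A"
  shows "transpose M b ` (A - {M}) = A - {b}"
proof (cases "b = M")
  case True then show ?thesis by simp
next
  case False
  show ?thesis
  proof
    show "transpose M b ` (A - {M}) \<subseteq> A - {b}" using assms False by (auto simp: transpose_def)
    show "A - {b} \<subseteq> transpose M b ` (A - {M})"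
    proof
      fix x assume x: "x \<in> A - {b}"
      show "x \<in> transpose M b ` (A - {M})"
      proof (cases "x = M")
        case True
        then have "x = transpose M b b" by simp
        then show ?thesis using assms False by blast
      next
        case False
        then have "x = transpose M b x" using x by (simp add: transpose_def)
        then show ?thesis using x False by blast
      qed
    qed
  qed
qed

lemma GL_main:
  "\<forall>A (z::nat \<Rightarrow> complex). card A = n \<longrightarrow> finite A \<longrightarrow> inj_on z A \<longrightarrow> (\<forall>i\<in>A. z i \<noteq> 0) \<longrightarrow>
     (\<Sum>\<sigma>\<in>{\<sigma>. \<sigma> permutes A}. 1 / pprod (\<lambda>i j. 1 - z (\<sigma> j) / z (\<sigma> i)) A) = 1"
proof (induction n)
  case 0
  show ?case
  proof (intro allI impI)
    fix A :: "nat set" and z :: "nat \<Rightarrow> complex"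
    assume "card A = 0" "finite A"
    then have A: "A = {}" by simp
    show "(\<Sum>\<sigma>\<in>{\<sigma>. \<sigma> permutes A}. 1 / pprod (\<lambda>i j. 1 - z (\<sigma> j) / z (\<sigma> i)) A) = 1"
      unfolding A by (simp add: permutes_empty pprod_def)
  qed
next
  case (Suc n)
  show ?case
  proof (intro allI impI)
    fix A :: "nat set" and z :: "nat \<Rightarrow> complex"
    assume cA: "card A = Suc n" and fA: "finite A" and inj: "inj_on z A" and nz: "\<forall>i\<in>A. z i \<noteq> 0"
    have ne: "A \<noteq> {}" using cA by auto
    define M where "M = Max A"
    have M: "M \<in> A" using fA ne by (simp add: M_def)
    have mx: "\<And>i. i \<in> A \<Longrightarrow> i \<le> M" using fA by (simp add: M_def)
    define A0 where "A0 = A - {M}"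
    have fA0: "finite A0" using fA by (simp add: A0_def)
    have AA0: "A = insert M A0" "M \<notin> A0" using M by (auto simp: A0_def)
    have cA0: "card A0 = n" using cA M fA by (simp add: A0_def)
    define X where "X b = (\<Prod>j\<in>A-{b}. 1 - z b / z j)" for b
    have inner: "(\<Sum>q\<in>{q. q permutes A0}. 1 / pprod (\<lambda>i j. 1 - z ((transpose M b \<circ> q) j) / z ((transpose M b \<circ> q) i)) A)
       = 1 / X b" if b: "b \<in> A" for b
    proof -
      define \<tau> where "\<tau> = transpose M b"
      have imA0: "\<tau> ` A0 = A - {b}" unfolding \<tau>_def A0_def by (rule transpose_image_Diff[OF b M])
      have injt: "inj_on \<tau> A0" unfolding \<tau>_def by (auto simp: inj_on_def dest: transpose_eq_imp_eq)
      have eq: "1 / pprod (\<lambda>i j. 1 - z ((\<tau> \<circ> q) j) / z ((\<tau> \<circ> q) i)) A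
          = (1 / pprod (\<lambda>i j. 1 - (z \<circ> \<tau>) (q j) / (z \<circ> \<tau>) (q i)) A0) * (1 / X b)"
        if q: "q permutes A0" for q
      proof -
        have qM: "q M = M" using permutes_not_in[OF q AA0(2)] .
        have "pprod (\<lambda>i j. 1 - z ((\<tau> \<circ> q) j) / z ((\<tau> \<circ> q) i)) A
            = pprod (\<lambda>i j. 1 - z ((\<tau> \<circ> q) j) / z ((\<tau> \<circ> q) i)) A0 * (\<Prod>i\<in>A0. 1 - z b / z (\<tau> (q i)))"
          using pprod_remove_max[OF fA M mx] qM by (simp add: A0_def \<tau>_def)
        also have "(\<Prod>i\<in>A0. 1 - z b / z (\<tau> (q i))) = (\<Prod>i\<in>A0. 1 - z b / z (\<tau> i))"
          using prod.permute[OF q, of "\<lambda>i. 1 - z b / z (\<tau> i)"] by (simp add: o_def)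
        also have "\<dots> = X b"
          unfolding X_def imA0[symmetric] using prod.reindex[OF injt, of "\<lambda>j. 1 - z b / z j"] by (simp add: o_def)
        finally show ?thesis by (simp add: o_def)
      qed
      have IH: "(\<Sum>q\<in>{q. q permutes A0}. 1 / pprod (\<lambda>i j. 1 - (z \<circ> \<tau>) (q j) / (z \<circ> \<tau>) (q i)) A0) = 1"
      proof -
        have i1: "inj_on (z \<circ> \<tau>) A0" using injt inj imA0 by (intro comp_inj_on) (auto intro: inj_on_subset)
        have i2: "\<forall>i\<in>A0. (z \<circ> \<tau>) i \<noteq> 0" using imA0 nz by auto
        show ?thesis using Suc.IH cA0 fA0 i1 i2 by blast
      qed
      have "(\<Sum>q\<in>{q. q permutes A0}. 1 / pprod (\<lambda>i j. 1 - z ((\<tau> \<circ> q) j) / z ((\<tau> \<circ> q) i)) A)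
          = (\<Sum>q\<in>{q. q permutes A0}. (1 / pprod (\<lambda>i j. 1 - (z \<circ> \<tau>) (q j) / (z \<circ> \<tau>) (q i)) A0) * (1 / X b))"
      proof (rule sum.cong[OF refl])
        fix q assume "q \<in> {q. q permutes A0}"
        then show "1 / pprod (\<lambda>i j. 1 - z ((\<tau> \<circ> q) j) / z ((\<tau> \<circ> q) i)) A
          = (1 / pprod (\<lambda>i j. 1 - (z \<circ> \<tau>) (q j) / (z \<circ> \<tau>) (q i)) A0) * (1 / X b)"
          using eq[of q] by simp
      qed
      also have "\<dots> = 1 / X b" unfolding sum_distrib_right[symmetric] IH by simp
      finally show ?thesis unfolding \<tau>_def .
    qed
    have "(\<Sum>\<sigma>\<in>{\<sigma>. \<sigma> permutes A}. 1 / pprod (\<lambda>i j. 1 - z (\<sigma> j) / z (\<sigma> i)) A)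
        = (\<Sum>b\<in>A. \<Sum>q\<in>{q. q permutes A0}. 1 / pprod (\<lambda>i j. 1 - z ((transpose M b \<circ> q) j) / z ((transpose M b \<circ> q) i)) A)"
      unfolding AA0(1) by (subst sum_over_permutations_insert[OF fA0 AA0(2)]) simp
    also have "\<dots> = (\<Sum>b\<in>A. 1 / X b)" using inner by simp
    also have "\<dots> = (\<Sum>b\<in>A. \<Prod>k\<in>A-{b}. z k / (z k - z b))"
    proof (intro sum.cong refl)
      fix b assume b: "b \<in> A"
      have "1 / X b = (\<Prod>k\<in>A-{b}. 1 / (1 - z b / z k))"
        unfolding X_def by (simp add: prod_dividef)
      also have "\<dots> = (\<Prod>k\<in>A-{b}. z k / (z k - z b))"
      proof (intro prod.cong refl)
        fix k assume "k \<in> A - {b}"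
        then have "z k \<noteq> 0" using nz by auto
        then show "1 / (1 - z b / z k) = z k / (z k - z b)" by (simp add: field_simps)
      qed
      finally show "1 / X b = (\<Prod>k\<in>A-{b}. z k / (z k - z b))" .
    qed
    also have "\<dots> = 1" by (rule lagrange_one[OF fA ne inj])
    finally show "(\<Sum>\<sigma>\<in>{\<sigma>. \<sigma> permutes A}. 1 / pprod (\<lambda>i j. 1 - z (\<sigma> j) / z (\<sigma> i)) A) = 1" .
  qed
qed

lemma pprod_cong: "(\<And>i j. i \<in> A \<Longrightarrow> j \<in> A \<Longrightarrow> g i j = g' i j) \<Longrightarrow> pprod g A = pprod g' A"
  unfolding pprod_def by (intro prod.cong refl) auto

lemma X_gen:
  assumes fA: "finite A" and fB: "finite B" and c: "card B + 1 \<le> card A" and ha: "HA A a"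
    and hb: "\<forall>i\<in>B. \<forall>j\<in>B. b i * b j \<noteq> 1"
  shows "(\<Sum>S\<in>Ev A. Kf A B (inv_on S a) b) = 1"
proof -
  have "infinite (UNIV - B :: nat set)" using fB by (simp add: infinite_UNIV_nat Diff_infinite_finite)
  then obtain F where F: "finite F" "card F = card A - card B - 1" "F \<subseteq> UNIV - B"
    using infinite_arbitrarily_large by blast
  define b0 where "b0 j = (if j \<in> F then 0 else b j)" for j
  have disj: "B \<inter> F = {}" using F by auto
  have K: "Kf A (B \<union> F) c b0 = Kf A B c b" for c
  proof -
    have "Cf A (B \<union> F) c b0 = Cf A B c b"
      unfolding Cf_def
    proof (rule prod.cong[OF refl])
      fix i assume "i \<in> A"
      have "(\<Prod>j\<in>B \<union> F. 1 - c i * b0 j) = (\<Prod>j\<in>B. 1 - c i * b0 j) * (\<Prod>j\<in>F. 1 - c i * b0 j)"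
        by (rule prod.union_disjoint[OF fB F(1) disj])
      also have "(\<Prod>j\<in>F. 1 - c i * b0 j) = 1" by (simp add: b0_def)
      also have "(\<Prod>j\<in>B. 1 - c i * b0 j) = (\<Prod>j\<in>B. 1 - c i * b j)"
        using disj by (intro prod.cong refl) (auto simp: b0_def)
      finally show "(\<Prod>j\<in>B \<union> F. 1 - c i * b0 j) = (\<Prod>j\<in>B. 1 - c i * b j)" by simp
    qed
    moreover have "Db (B \<union> F) b0 = Db B b"
    proof -
      have "pprod (\<lambda>i j. 1 - b0 i * b0 j) (B \<union> F) = pprod (\<lambda>i j. 1 - b0 i * b0 j) B"
        by (rule pprod_ext_one) (use fB F(1) disj in \<open>auto simp: b0_def mult.commute\<close>)
      also have "\<dots> = pprod (\<lambda>i j. 1 - b i * b j) B"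
        by (rule pprod_cong) (use disj in \<open>auto simp: b0_def\<close>)
      moreover have "(\<Prod>j\<in>B \<union> F. 1 - b0 j * b0 j) = (\<Prod>j\<in>B. 1 - b j * b j)"
      proof -
        have "(\<Prod>j\<in>B \<union> F. 1 - b0 j * b0 j) = (\<Prod>j\<in>B. 1 - b0 j * b0 j) * (\<Prod>j\<in>F. 1 - b0 j * b0 j)"
          by (rule prod.union_disjoint[OF fB F(1) disj])
        also have "(\<Prod>j\<in>F. 1 - b0 j * b0 j) = 1" by (simp add: b0_def)
        also have "(\<Prod>j\<in>B. 1 - b0 j * b0 j) = (\<Prod>j\<in>B. 1 - b j * b j)"
          using disj by (intro prod.cong refl) (auto simp: b0_def)
        finally show ?thesis by simp
      qed
      ultimately show ?thesis unfolding Db_def by simp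
    qed
    ultimately show ?thesis by (simp add: Kf_def)
  qed
  have "(\<Sum>S\<in>Ev A. Kf A (B \<union> F) (inv_on S a) b0) = 1"
  proof -
    have h1: "finite (B \<union> F)" using fB F by simp
    have h2: "card A = card (B \<union> F) + 1" using card_Un_disjoint[OF fB F(1) disj] F c by simp
    have h3: "\<forall>i\<in>B \<union> F. \<forall>j\<in>B \<union> F. b0 i * b0 j \<noteq> 1" using hb by (auto simp: b0_def)
    show ?thesis using X_main[of "card (B \<union> F)"] fA h1 h2 h3 ha by blast
  qed
  then show ?thesis using K by simp
qed

lemma card_Ev: "finite I \<Longrightarrow> I \<noteq> {} \<Longrightarrow> card (Ev I) = 2 ^ (card I - 1)"
proof -
  assume fI: "finite I" and ne: "I \<noteq> {}"
  have eo: "card {T. T \<subseteq> I \<and> {} \<subseteq> T \<and> even (card T)} = card {T. T \<subseteq> I \<and> {} \<subseteq> T \<and> odd (card T)}"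
    by (rule card_subsupersets_even_odd) (use fI ne in auto)
  have "Pow I = Ev I \<union> Od I" by (auto simp: Ev_def Od_def)
  moreover have "Ev I \<inter> Od I = {}" by (auto simp: Ev_def Od_def)
  ultimately have "card (Pow I) = card (Ev I) + card (Od I)"
    using fI by (metis card_Un_disjoint finite_Pow_iff finite_Un)
  then have "2 ^ card I = 2 * card (Ev I)" using eo fI by (simp add: card_Pow Ev_def Od_def)
  moreover obtain k where "card I = Suc k" using fI ne by (metis card_0_eq not0_implies_Suc)
  ultimately show ?thesis by simp
qed

lemma uvar_diff: "a \<noteq> 0 \<Longrightarrow> b \<noteq> 0 \<Longrightarrow> uvar a - uvar b = a * ((1 - b / a) * (1 - inverse a * inverse b))"
  unfolding uvar_def by (simp add: field_simps)

lemma vdm_factor: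
  assumes nz: "\<forall>i\<in>{1..k}. z i \<noteq> 0"
  shows "vandermonde k (\<lambda>i. uvar (z i)) = (\<Prod>i\<in>{1..k}. z i ^ (k - i)) * pprod (\<lambda>i j. 1 - z j / z i) {1..k}
          * pprod (\<lambda>i j. 1 - inverse (z i) * inverse (z j)) {1..k}"
proof -
  have s: "{i<..k} = {j\<in>{1..k}. i<j}" if "i \<in> {1..k}" for i using that by auto
  have "vandermonde k (\<lambda>i. uvar (z i)) = (\<Prod>i\<in>{1..k}. \<Prod>j\<in>{j\<in>{1..k}. i<j}. z i * ((1 - z j / z i) * (1 - inverse (z i) * inverse (z j))))"
    unfolding vandermonde_def
  proof (rule prod.cong[OF refl])
    fix i assume i: "i \<in> {1..k}"
    show "(\<Prod>j\<in>{i<..k}. uvar (z i) - uvar (z j)) = (\<Prod>j\<in>{j\<in>{1..k}. i<j}. z i * ((1 - z j / z i) * (1 - inverse (z i) * inverse (z j))))"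
      unfolding s[OF i] using nz i by (intro prod.cong refl uvar_diff) auto
  qed
  also have "\<dots> = (\<Prod>i\<in>{1..k}. z i ^ (k - i) * ((\<Prod>j\<in>{j\<in>{1..k}. i<j}. 1 - z j / z i) * (\<Prod>j\<in>{j\<in>{1..k}. i<j}. 1 - inverse (z i) * inverse (z j))))"
  proof (rule prod.cong[OF refl])
    fix i assume i: "i \<in> {1..k}"
    have c: "card {j\<in>{1..k}. i<j} = k - i" unfolding s[OF i, symmetric] by simp
    show "(\<Prod>j\<in>{j\<in>{1..k}. i<j}. z i * ((1 - z j / z i) * (1 - inverse (z i) * inverse (z j))))
        = z i ^ (k - i) * ((\<Prod>j\<in>{j\<in>{1..k}. i<j}. 1 - z j / z i) * (\<Prod>j\<in>{j\<in>{1..k}. i<j}. 1 - inverse (z i) * inverse (z j)))"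
      by (simp only: prod.distrib prod_constant c)
  qed
  also have "\<dots> = (\<Prod>i\<in>{1..k}. z i ^ (k - i)) * pprod (\<lambda>i j. 1 - z j / z i) {1..k}
          * pprod (\<lambda>i j. 1 - inverse (z i) * inverse (z j)) {1..k}"
    unfolding pprod_def by (simp add: prod.distrib mult.assoc)
  finally show ?thesis .
qed

lemma frac_final:
  fixes C Xd Yd Yp P1x P2x P1y P2y Q :: complex
  assumes "Xd \<noteq> 0" "Yd \<noteq> 0" "Yp \<noteq> 0"
  shows "C * Xd * (Yd * Yp) / ((Xd * P1x * P2x) * (Yd * P1y * P2y) * (Yp * Q))
       = C / (P2x * (P2y * Q)) * (1 / P1x) * (1 / P1y)"
  using assms
  by (cases "P1x = 0"; cases "P1y = 0"; cases "P2x = 0"; cases "P2y = 0"; cases "Q = 0") (simp_all add: field_simps)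

lemma summand_eq:
  assumes nx: "\<forall>i\<in>{1..m}. x i \<noteq> 0" and ny: "\<forall>j\<in>{1..n}. y j \<noteq> 0"
  shows "summand m n x y = Kf {1..m} {1..n} (\<lambda>i. inverse (x i)) (\<lambda>j. inverse (y j))
           * (1 / pprod (\<lambda>i j. 1 - x j / x i) {1..m}) * (1 / pprod (\<lambda>i j. 1 - y j / y i) {1..n})"
proof -
  have e1: "(\<Prod>j\<in>{1..n}. y j ^ (n + 1 - j)) = (\<Prod>j\<in>{1..n}. y j ^ (n - j)) * (\<Prod>j\<in>{1..n}. y j)"
    unfolding prod.distrib[symmetric] by (intro prod.cong refl) (simp add: Suc_diff_le power_Suc2)
  have e2: "(\<Prod>j\<in>{1..n}. y j - inverse (y j)) = (\<Prod>j\<in>{1..n}. y j) * (\<Prod>j\<in>{1..n}. 1 - inverse (y j) * inverse (y j))"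
    unfolding prod.distrib[symmetric] using ny by (intro prod.cong refl) (auto simp: field_simps)
  have Xd: "(\<Prod>i\<in>{1..m}. x i ^ (m - i)) \<noteq> 0" using nx by (simp add: prod_zero_iff)
  have Yd: "(\<Prod>j\<in>{1..n}. y j ^ (n - j)) \<noteq> 0" using ny by (simp add: prod_zero_iff)
  have Yp: "(\<Prod>j\<in>{1..n}. y j) \<noteq> 0" using ny by (simp add: prod_zero_iff)
  show ?thesis
    unfolding summand_def vdm_factor[OF nx] vdm_factor[OF ny] e1 e2 Kf_def Cf_def Da_def Db_def
    by (rule frac_final[OF Xd Yd Yp])
qed

lemma weyl_eq:
  assumes "\<sigma> permutes I"
  shows "weyl_act \<sigma> S x = (\<lambda>i. inv_on (\<sigma> ` S) x (\<sigma> i))"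
proof -
  have "inj \<sigma>" using assms by (rule permutes_inj)
  then show ?thesis unfolding weyl_act_def inv_on_def by (auto simp: fun_eq_iff inj_image_mem_iff)
qed

lemma inv_inv_on: "(\<lambda>i. inverse (inv_on R x i)) = inv_on R (\<lambda>i. inverse (x i))"
  unfolding inv_on_def by auto

lemma Kf_permA:
  assumes "\<sigma> permutes A" "finite A"
  shows "Kf A B (\<lambda>i. a (\<sigma> i)) b = Kf A B a b"
proof -
  have "Cf A B (\<lambda>i. a (\<sigma> i)) b = Cf A B a b"
    unfolding Cf_def using prod.permute[OF assms(1), of "\<lambda>i. \<Prod>j\<in>B. 1 - a i * b j"] by (simp add: o_def)
  moreover have "Da A (\<lambda>i. a (\<sigma> i)) = Da A a"
    unfolding Da_def using pprod_bij[OF assms(2) permutes_imp_bij[OF assms(1)], of "\<lambda>i j. 1 - a i * a j"]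
    by (simp add: mult.commute)
  ultimately show ?thesis by (simp add: Kf_def)
qed

lemma Kf_permB:
  assumes "\<sigma> permutes B" "finite B"
  shows "Kf A B a (\<lambda>j. b (\<sigma> j)) = Kf A B a b"
proof -
  have "Cf A B a (\<lambda>j. b (\<sigma> j)) = Cf A B a b"
    unfolding Cf_def
  proof (rule prod.cong[OF refl])
    fix i show "(\<Prod>j\<in>B. 1 - a i * b (\<sigma> j)) = (\<Prod>j\<in>B. 1 - a i * b j)"
      using prod.permute[OF assms(1), of "\<lambda>j. 1 - a i * b j"] by (simp add: o_def)
  qed
  moreover have "Db B (\<lambda>j. b (\<sigma> j)) = Db B b"
  proof -
    have "pprod (\<lambda>i j. 1 - b (\<sigma> i) * b (\<sigma> j)) B = pprod (\<lambda>i j. 1 - b i * b j) B"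
      using pprod_bij[OF assms(2) permutes_imp_bij[OF assms(1)], of "\<lambda>i j. 1 - b i * b j"]
      by (simp add: mult.commute)
    moreover have "(\<Prod>j\<in>B. 1 - b (\<sigma> j) * b (\<sigma> j)) = (\<Prod>j\<in>B. 1 - b j * b j)"
      using prod.permute[OF assms(1), of "\<lambda>j. 1 - b j * b j"] by (simp add: o_def)
    ultimately show ?thesis unfolding Db_def by simp
  qed
  ultimately show ?thesis by (simp add: Kf_def)
qed

lemma bij_image_Pow:
  assumes "\<sigma> permutes I"
  shows "bij_betw ((`) \<sigma>) {S. S \<subseteq> I \<and> P (card S)} {S. S \<subseteq> I \<and> P (card S)}"
proof (rule bij_betw_byWitness[where f' = "(`) (inv \<sigma>)"])
  have inj: "inj \<sigma>" using assms by (rule permutes_inj)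
  have im: "\<sigma> ` I = I" using assms by (rule permutes_image)
  have ii: "inv \<sigma> ` I = I" using permutes_image[OF permutes_inv[OF assms]] .
  have injinv: "inj (inv \<sigma>)" using permutes_inj[OF permutes_inv[OF assms]] .
  show "\<forall>S\<in>{S. S \<subseteq> I \<and> P (card S)}. inv \<sigma> ` \<sigma> ` S = S"
    using inj by (simp add: image_comp)
  show "\<forall>S\<in>{S. S \<subseteq> I \<and> P (card S)}. \<sigma> ` inv \<sigma> ` S = S"
    using permutes_inverses(1)[OF assms] by (simp add: image_comp)
  show "(`) \<sigma> ` {S. S \<subseteq> I \<and> P (card S)} \<subseteq> {S. S \<subseteq> I \<and> P (card S)}"
    using im inj by (auto simp: card_image inj_on_subset)
  show "(`) (inv \<sigma>) ` {S. S \<subseteq> I \<and> P (card S)} \<subseteq> {S. S \<subseteq> I \<and> P (card S)}"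
    using ii injinv by (auto simp: card_image inj_on_subset)
qed

theorem proposition7p1:
  fixes m n :: nat and x y :: "nat \<Rightarrow> complex"
  assumes "m \<ge> 1"
    and "\<And>i. i \<in> {1..m} \<Longrightarrow> x i \<noteq> 0"
    and "\<And>j. j \<in> {1..n} \<Longrightarrow> y j \<noteq> 0"
    and "\<And>i j. i \<in> {1..m} \<Longrightarrow> j \<in> {1..m} \<Longrightarrow> i \<noteq> j \<Longrightarrow> uvar (x i) \<noteq> uvar (x j)"
    and "\<And>i j. i \<in> {1..n} \<Longrightarrow> j \<in> {1..n} \<Longrightarrow> i \<noteq> j \<Longrightarrow> uvar (y i) \<noteq> uvar (y j)"
    and "\<And>j. j \<in> {1..n} \<Longrightarrow> y j - inverse (y j) \<noteq> 0"
  shows "(\<Sum>\<sigma>\<in>{\<sigma>. \<sigma> permutes {1..m}}. \<Sum>S\<in>{S. S \<subseteq> {1..m} \<and> even (card S)}.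
            \<Sum>\<tau>\<in>{\<tau>. \<tau> permutes {1..n}}. \<Sum>T\<in>{T. T \<subseteq> {1..n}}.
              summand m n (weyl_act \<sigma> S x) (weyl_act \<tau> T y))
         = 2 ^ min (m - 1) n"
proof -
  define I where "I = {1..m}"
  define J where "J = {1..n}"
  have fI: "finite I" and fJ: "finite J" by (simp_all add: I_def J_def)
  have cI: "card I = m" and cJ: "card J = n" by (simp_all add: I_def J_def)
  define a where "a i = inverse (x i)" for i
  define b where "b j = inverse (y j)" for j
  have nx: "\<And>i. i \<in> I \<Longrightarrow> x i \<noteq> 0" using assms(2) by (simp add: I_def)
  have ny: "\<And>j. j \<in> J \<Longrightarrow> y j \<noteq> 0" using assms(3) by (simp add: J_def)
  have ux: "x i \<noteq> x j \<and> x i * x j \<noteq> 1" if "i \<in> I" "j \<in> I" "i \<noteq> j" for i j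
  proof -
    have ne: "uvar (x i) \<noteq> uvar (x j)" using assms(4) that by (simp add: I_def)
    have "x j = inverse (x i)" if "x i * x j = 1" using that by (metis inverse_unique)
    then show ?thesis using ne unfolding uvar_def by (auto simp: add.commute)
  qed
  have uy: "y i \<noteq> y j \<and> y i * y j \<noteq> 1" if "i \<in> J" "j \<in> J" "i \<noteq> j" for i j
  proof -
    have ne: "uvar (y i) \<noteq> uvar (y j)" using assms(5) that by (simp add: J_def)
    have "y j = inverse (y i)" if "y i * y j = 1" using that by (metis inverse_unique)
    then show ?thesis using ne unfolding uvar_def by (auto simp: add.commute)
  qed
  have y2: "y j * y j \<noteq> 1" if "j \<in> J" for j
  proof
    assume "y j * y j = 1"
    then have "y j = inverse (y j)" by (metis inverse_unique)
    then show False using assms(6) that by (simp add: J_def)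
  qed
  have HAa: "HA I a" unfolding HA_def a_def using nx ux by (auto simp: field_simps)
  have HBb: "HB J b" unfolding HB_def b_def using ny uy y2 by (auto simp: field_simps)
  have GLx: "(\<Sum>\<sigma>\<in>{\<sigma>. \<sigma> permutes I}. 1 / pprod (\<lambda>i j. 1 - inv_on R x (\<sigma> j) / inv_on R x (\<sigma> i)) I) = 1" for R
  proof -
    have "inj_on (inv_on R x) I"
    proof (rule inj_onI)
      fix i j assume ij: "i \<in> I" "j \<in> I" "inv_on R x i = inv_on R x j"
      show "i = j"
      proof (rule ccontr)
        assume "i \<noteq> j"
        then have h: "x i \<noteq> x j" "x i * x j \<noteq> 1" "x i \<noteq> 0" "x j \<noteq> 0" using ux ij nx by auto
        show False using ij(3) h unfolding inv_on_def by (auto simp: field_simps split: if_splits)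
      qed
    qed
    moreover have "\<forall>i\<in>I. inv_on R x i \<noteq> 0" using nx by (simp add: inv_on_def)
    ultimately show ?thesis using GL_main fI by blast
  qed
  have GLy: "(\<Sum>\<tau>\<in>{\<tau>. \<tau> permutes J}. 1 / pprod (\<lambda>i j. 1 - inv_on T y (\<tau> j) / inv_on T y (\<tau> i)) J) = 1" for T
  proof -
    have "inj_on (inv_on T y) J"
    proof (rule inj_onI)
      fix i j assume ij: "i \<in> J" "j \<in> J" "inv_on T y i = inv_on T y j"
      show "i = j"
      proof (rule ccontr)
        assume "i \<noteq> j"
        then have h: "y i \<noteq> y j" "y i * y j \<noteq> 1" "y i \<noteq> 0" "y j \<noteq> 0" using uy ij ny by auto
        show False using ij(3) h unfolding inv_on_def by (auto simp: field_simps split: if_splits)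
      qed
    qed
    moreover have "\<forall>i\<in>J. inv_on T y i \<noteq> 0" using ny by (simp add: inv_on_def)
    ultimately show ?thesis using GL_main fJ by blast
  qed
  define K where "K R T = Kf I J (inv_on R a) (inv_on T b)" for R T
  define g where "g \<sigma> R = 1 / pprod (\<lambda>i j. 1 - inv_on R x (\<sigma> j) / inv_on R x (\<sigma> i)) I" for \<sigma> R
  define h where "h \<tau> T = 1 / pprod (\<lambda>i j. 1 - inv_on T y (\<tau> j) / inv_on T y (\<tau> i)) J" for \<tau> T
  define Pe where "Pe = {\<sigma>. \<sigma> permutes I}"
  define Pf where "Pf = {\<tau>. \<tau> permutes J}"
  have summ: "summand m n (weyl_act \<sigma> S x) (weyl_act \<tau> T y) = K (\<sigma> ` S) (\<tau> ` T) * g \<sigma> (\<sigma> ` S) * h \<tau> (\<tau> ` T)"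
    if s: "\<sigma> permutes I" and t: "\<tau> permutes J" for \<sigma> \<tau> S T
  proof -
    have nx': "\<forall>i\<in>{1..m}. weyl_act \<sigma> S x i \<noteq> 0"
      using nx permutes_in_image[OF s] unfolding weyl_act_def I_def by auto
    have ny': "\<forall>j\<in>{1..n}. weyl_act \<tau> T y j \<noteq> 0"
      using ny permutes_in_image[OF t] unfolding weyl_act_def J_def by auto
    have "Kf {1..m} {1..n} (\<lambda>i. inverse (weyl_act \<sigma> S x i)) (\<lambda>j. inverse (weyl_act \<tau> T y j))
        = Kf I J (\<lambda>i. inv_on (\<sigma> ` S) a (\<sigma> i)) (\<lambda>j. inv_on (\<tau> ` T) b (\<tau> j))"
      unfolding weyl_eq[OF s] weyl_eq[OF t] I_def[symmetric] J_def[symmetric] a_def b_def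
      using inv_inv_on[of "\<sigma> ` S" x] inv_inv_on[of "\<tau> ` T" y] by (simp add: fun_eq_iff)
    also have "\<dots> = K (\<sigma> ` S) (\<tau> ` T)"
      unfolding K_def Kf_permA[OF s fI] Kf_permB[OF t fJ] ..
    finally have KK: "Kf {1..m} {1..n} (\<lambda>i. inverse (weyl_act \<sigma> S x i)) (\<lambda>j. inverse (weyl_act \<tau> T y j)) = K (\<sigma> ` S) (\<tau> ` T)" .
    have KK': "Kf I J (\<lambda>i. inverse (inv_on (\<sigma> ` S) x (\<sigma> i))) (\<lambda>j. inverse (inv_on (\<tau> ` T) y (\<tau> j))) = K (\<sigma> ` S) (\<tau> ` T)"
      using KK unfolding weyl_eq[OF s] weyl_eq[OF t] I_def[symmetric] J_def[symmetric] .
    show ?thesis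
      apply (subst summand_eq[OF nx' ny'])
      unfolding g_def h_def weyl_eq[OF s] weyl_eq[OF t] I_def[symmetric] J_def[symmetric] KK'
      by simp
  qed
  have EvI: "{S. S \<subseteq> {1..m} \<and> even (card S)} = Ev I" by (simp add: Ev_def I_def)
  have PowJ: "{T. T \<subseteq> {1..n}} = {T. T \<subseteq> J \<and> (\<lambda>_. True) (card T)}" by (simp add: J_def)
  have reS: "(\<Sum>S\<in>Ev I. f (\<sigma> ` S)) = (\<Sum>R\<in>Ev I. f R)" if s: "\<sigma> permutes I" for \<sigma> and f :: "nat set \<Rightarrow> complex"
    using sum.reindex_bij_betw[OF bij_image_Pow[OF s, of even], of f] by (simp add: Ev_def)
  have reT: "(\<Sum>T\<in>{T. T \<subseteq> J \<and> (\<lambda>_. True) (card T)}. f (\<tau> ` T)) = (\<Sum>T\<in>Pow J. f T)" if t: "\<tau> permutes J" for \<tau> and f :: "nat set \<Rightarrow> complex"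
    using sum.reindex_bij_betw[OF bij_image_Pow[OF t, of "\<lambda>_. True"], of f] by (simp add: Pow_def)
  have "?thesis \<longleftrightarrow> (\<Sum>\<sigma>\<in>Pe. \<Sum>S\<in>Ev I. \<Sum>\<tau>\<in>Pf. \<Sum>T\<in>{T. T \<subseteq> J \<and> (\<lambda>_. True) (card T)}.
              K (\<sigma> ` S) (\<tau> ` T) * g \<sigma> (\<sigma> ` S) * h \<tau> (\<tau> ` T)) = 2 ^ min (m - 1) n"
    unfolding EvI PowJ Pe_def Pf_def I_def[symmetric] J_def[symmetric]
    by (intro arg_cong2[where f="(=)"] sum.cong refl) (auto simp: summ Ev_def)
  also have "(\<Sum>\<sigma>\<in>Pe. \<Sum>S\<in>Ev I. \<Sum>\<tau>\<in>Pf. \<Sum>T\<in>{T. T \<subseteq> J \<and> (\<lambda>_. True) (card T)}.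
              K (\<sigma> ` S) (\<tau> ` T) * g \<sigma> (\<sigma> ` S) * h \<tau> (\<tau> ` T))
        = (\<Sum>\<sigma>\<in>Pe. \<Sum>R\<in>Ev I. \<Sum>\<tau>\<in>Pf. \<Sum>T\<in>Pow J. K R T * g \<sigma> R * h \<tau> T)"
  proof (rule sum.cong[OF refl])
    fix \<sigma> assume s: "\<sigma> \<in> Pe"
    have "(\<Sum>S\<in>Ev I. \<Sum>\<tau>\<in>Pf. \<Sum>T\<in>{T. T \<subseteq> J \<and> (\<lambda>_. True) (card T)}. K (\<sigma> ` S) (\<tau> ` T) * g \<sigma> (\<sigma> ` S) * h \<tau> (\<tau> ` T))
        = (\<Sum>S\<in>Ev I. \<Sum>\<tau>\<in>Pf. \<Sum>T\<in>Pow J. K (\<sigma> ` S) T * g \<sigma> (\<sigma> ` S) * h \<tau> T)"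
      by (intro sum.cong refl reT) (auto simp: Pf_def)
    also have "\<dots> = (\<Sum>R\<in>Ev I. \<Sum>\<tau>\<in>Pf. \<Sum>T\<in>Pow J. K R T * g \<sigma> R * h \<tau> T)"
      by (rule reS) (use s in \<open>simp add: Pe_def\<close>)
    finally show "(\<Sum>S\<in>Ev I. \<Sum>\<tau>\<in>Pf. \<Sum>T\<in>{T. T \<subseteq> J \<and> (\<lambda>_. True) (card T)}. K (\<sigma> ` S) (\<tau> ` T) * g \<sigma> (\<sigma> ` S) * h \<tau> (\<tau> ` T))
        = (\<Sum>R\<in>Ev I. \<Sum>\<tau>\<in>Pf. \<Sum>T\<in>Pow J. K R T * g \<sigma> R * h \<tau> T)" .
  qed
  also have "(\<Sum>\<sigma>\<in>Pe. \<Sum>R\<in>Ev I. \<Sum>\<tau>\<in>Pf. \<Sum>T\<in>Pow J. K R T * g \<sigma> R * h \<tau> T)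
      = (\<Sum>R\<in>Ev I. \<Sum>T\<in>Pow J. K R T * (\<Sum>\<sigma>\<in>Pe. g \<sigma> R) * (\<Sum>\<tau>\<in>Pf. h \<tau> T))"
  proof -
    have "(\<Sum>\<sigma>\<in>Pe. \<Sum>R\<in>Ev I. \<Sum>\<tau>\<in>Pf. \<Sum>T\<in>Pow J. K R T * g \<sigma> R * h \<tau> T)
        = (\<Sum>R\<in>Ev I. \<Sum>\<sigma>\<in>Pe. \<Sum>\<tau>\<in>Pf. \<Sum>T\<in>Pow J. K R T * g \<sigma> R * h \<tau> T)"
      by (rule sum.swap)
    also have "\<dots> = (\<Sum>R\<in>Ev I. \<Sum>T\<in>Pow J. \<Sum>\<sigma>\<in>Pe. \<Sum>\<tau>\<in>Pf. K R T * g \<sigma> R * h \<tau> T)"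
    proof (rule sum.cong[OF refl])
      fix R
      have "(\<Sum>\<sigma>\<in>Pe. \<Sum>\<tau>\<in>Pf. \<Sum>T\<in>Pow J. K R T * g \<sigma> R * h \<tau> T)
          = (\<Sum>\<sigma>\<in>Pe. \<Sum>T\<in>Pow J. \<Sum>\<tau>\<in>Pf. K R T * g \<sigma> R * h \<tau> T)"
        by (intro sum.cong refl sum.swap)
      also have "\<dots> = (\<Sum>T\<in>Pow J. \<Sum>\<sigma>\<in>Pe. \<Sum>\<tau>\<in>Pf. K R T * g \<sigma> R * h \<tau> T)"
        by (rule sum.swap)
      finally show "(\<Sum>\<sigma>\<in>Pe. \<Sum>\<tau>\<in>Pf. \<Sum>T\<in>Pow J. K R T * g \<sigma> R * h \<tau> T)
          = (\<Sum>T\<in>Pow J. \<Sum>\<sigma>\<in>Pe. \<Sum>\<tau>\<in>Pf. K R T * g \<sigma> R * h \<tau> T)" .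
    qed
    also have "\<dots> = (\<Sum>R\<in>Ev I. \<Sum>T\<in>Pow J. K R T * (\<Sum>\<sigma>\<in>Pe. g \<sigma> R) * (\<Sum>\<tau>\<in>Pf. h \<tau> T))"
    proof (intro sum.cong refl)
      fix R T
      show "(\<Sum>\<sigma>\<in>Pe. \<Sum>\<tau>\<in>Pf. K R T * g \<sigma> R * h \<tau> T) = K R T * (\<Sum>\<sigma>\<in>Pe. g \<sigma> R) * (\<Sum>\<tau>\<in>Pf. h \<tau> T)"
      proof -
        have "K R T * (\<Sum>\<sigma>\<in>Pe. g \<sigma> R) * (\<Sum>\<tau>\<in>Pf. h \<tau> T) = K R T * ((\<Sum>\<sigma>\<in>Pe. g \<sigma> R) * (\<Sum>\<tau>\<in>Pf. h \<tau> T))"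
          by (rule mult.assoc)
        also have "\<dots> = K R T * (\<Sum>\<sigma>\<in>Pe. \<Sum>\<tau>\<in>Pf. g \<sigma> R * h \<tau> T)"
          by (simp only: sum_product)
        also have "\<dots> = (\<Sum>\<sigma>\<in>Pe. \<Sum>\<tau>\<in>Pf. K R T * (g \<sigma> R * h \<tau> T))"
          by (simp only: sum_distrib_left)
        finally show ?thesis by (simp only: mult.assoc)
      qed
    qed
    finally show ?thesis .
  qed
  also have "\<dots> = (\<Sum>R\<in>Ev I. \<Sum>T\<in>Pow J. K R T)"
    using GLx GLy by (simp add: g_def h_def Pe_def Pf_def)
  finally have goal: "?thesis \<longleftrightarrow> (\<Sum>R\<in>Ev I. \<Sum>T\<in>Pow J. K R T) = 2 ^ min (m - 1) n" .
  show ?thesis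
  proof (cases "m - 1 \<le> n")
    case True
    have "(\<Sum>T\<in>Pow J. K R T) = 1" if R: "R \<in> Ev I" for R
    proof -
      have h1: "card I \<le> card J + 1" using True cI cJ by simp
      have h2: "\<forall>i\<in>I. \<forall>j\<in>I. i \<noteq> j \<longrightarrow> inv_on R a i * inv_on R a j \<noteq> 1" using HA_inv[OF HAa] by blast
      show ?thesis unfolding K_def using Y_main[of "card J"] fI fJ h1 h2 HBb by blast
    qed
    then have "(\<Sum>R\<in>Ev I. \<Sum>T\<in>Pow J. K R T) = of_nat (card (Ev I))" by simp
    also have "card (Ev I) = 2 ^ (m - 1)" using card_Ev[OF fI] cI assms(1) by (auto simp: I_def)
    finally show ?thesis unfolding goal using True by simp
  next
    case False
    have "(\<Sum>R\<in>Ev I. K R T) = 1" if T: "T \<in> Pow J" for T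
    proof -
      have h1: "card J + 1 \<le> card I" using False cI cJ by simp
      have h2: "\<forall>i\<in>J. \<forall>j\<in>J. inv_on T b i * inv_on T b j \<noteq> 1" using HB_inv[OF HBb] by blast
      show ?thesis unfolding K_def by (rule X_gen[OF fI fJ h1 HAa h2])
    qed
    have "(\<Sum>R\<in>Ev I. \<Sum>T\<in>Pow J. K R T) = (\<Sum>T\<in>Pow J. \<Sum>R\<in>Ev I. K R T)" by (rule sum.swap)
    also have "\<dots> = of_nat (card (Pow J))" using \<open>\<And>T. T \<in> Pow J \<Longrightarrow> (\<Sum>R\<in>Ev I. K R T) = 1\<close> by simp
    also have "card (Pow J) = 2 ^ n" using fJ cJ by (simp add: card_Pow)
    finally show ?thesis unfolding goal using False by simp
  qed
qed

end
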